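(* Let the setting and Assumption (A) be as in the context and assume Assumption (A) holds. Let $\delta_0\le\frac{c_0}{\varsigma^2}\frac{\overline\sigma}{\|\mathbf X\|_{\infty,2}}$ with $c_0\in[0,1/2)$ a sufficiently small absolute constant. Then there exists a constant $c=c(c_0)\in(0,1)$ such that for all $k\in[K]$ and all $\theta\in\mathbb{R}^L$ with $\|\theta-\theta_k^*\|_2\le\delta_0/\overline\sigma$, $$(1-c)\underline\sigma^2\le\lambda_L(H_\theta)\le\lambda_1(H_\theta)\le(1+c)\overline\sigma^2.$$
   Context: $\mathbf X\in\mathbb{R}^{p\times L}$ has rows $x_j^\top$, $\|\mathbf X\|_{\infty,2}=\max_j\|x_j\|_2$; $A(x_j;\theta)=\exp(x_j^\top\theta)/\sum_l\exp(x_l^\top\theta)$, $A(\theta)\in\Delta^p$; $H_\theta=\mathbf X^\top(\mathrm{diag}(A(\theta))-A(\theta)A(\theta)^\top)\mathbf X$, with eigenvalues $\lambda_1\ge\dots\ge\lambda_L$. For $\omega=(\boldsymbol\alpha,\theta_1,\dots,\theta_K)$, $\pi(x_j;\omega)=\sum_k\alpha_kA(x_j;\theta_k)$. $\omega^*=(\boldsymbol\alpha^*,\theta_1^*,\dots,\theta_K^* )$ with all $\alpha^*_k>0$, $\pi^*=\pi(\cdot;\omega^* )$, and $\omega^*\in\Omega^*$, the set of maximizers of $\sum_j\pi^*(x_j)\log\pi(x_j;\omega)$. Assumption (A): constants $0<\underline\sigma^2\le\overline\sigma^2$, $\varsigma^2<\infty$ such that for every $\omega'\in\Omega^*$, $a,b\in[K]$,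 $u\in[0,1]$, $\theta=u\theta'_a+(1-u)\theta'_b$: $\underline\sigma^2\le\lambda_L(H_\theta)\le\lambda_1(H_\theta)\le\overline\sigma^2$ and $\lambda_1(H_\theta^{-1/2}\mathbf X^\top\mathrm{diag}(A(\theta))\mathbf XH_\theta^{-1/2})\le\varsigma^2$. *)

theory Defs
  imports Complex_Main "Jordan_Normal_Form.Matrix" "Jordan_Normal_Form.Char_Poly"
begin

(* X is a p x L real matrix (JNF), rows x_j = row X j; parameters theta are vectors of dim L *)

definition vnorm :: "real vec \<Rightarrow> real" where
  "vnorm v = sqrt (v \<bullet> v)"

definition Xnorm :: "real mat \<Rightarrow> real" where
  "Xnorm X = Max ((\<lambda>j. vnorm (row X j)) ` {..<dim_row X})"

definition softmax :: "real mat \<Rightarrow> real vec \<Rightarrow> nat \<Rightarrow> real" where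
  "softmax X \<theta> j = exp (row X j \<bullet> \<theta>) / (\<Sum>l<dim_row X. exp (row X l \<bullet> \<theta>))"

definition diagm :: "nat \<Rightarrow> (nat \<Rightarrow> real) \<Rightarrow> real mat" where
  "diagm n f = mat n n (\<lambda>(i,j). if i = j then f i else 0)"

definition Hmat :: "real mat \<Rightarrow> real vec \<Rightarrow> real mat" where
  "Hmat X \<theta> = transpose_mat X *
     (diagm (dim_row X) (softmax X \<theta>)
      - mat (dim_row X) (dim_row X) (\<lambda>(i,j). softmax X \<theta> i * softmax X \<theta> j)) * X"

definition Mmat :: "real mat \<Rightarrow> real vec \<Rightarrow> real mat" where
  "Mmat X \<theta> = transpose_mat X * diagm (dim_row X) (softmax X \<theta>) * X"

definition lam_max :: "real mat \<Rightarrow> real" where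
  "lam_max H = Max {k. eigenvalue H k}"

definition lam_min :: "real mat \<Rightarrow> real" where
  "lam_min H = Min {k. eigenvalue H k}"

definition pos_def_mat :: "real mat \<Rightarrow> nat \<Rightarrow> bool" where
  "pos_def_mat S n \<longleftrightarrow> S \<in> carrier_mat n n \<and> transpose_mat S = S \<and>
     (\<forall>v \<in> carrier_vec n. v \<noteq> 0\<^sub>v n \<longrightarrow> v \<bullet> (S *\<^sub>v v) > 0)"

(* H^{-1/2}: the unique symmetric positive definite S with S S H = I *)
definition inv_sqrt :: "real mat \<Rightarrow> real mat" where
  "inv_sqrt H = (THE S. pos_def_mat S (dim_row H) \<and> S * S * H = 1\<^sub>m (dim_row H))"

definition mixture :: "real mat \<Rightarrow> nat \<Rightarrow> (nat \<Rightarrow> real) \<Rightarrow> (nat \<Rightarrow> real vec) \<Rightarrow> nat \<Rightarrow> real" where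
  "mixture X K \<alpha> \<Theta> j = (\<Sum>k<K. \<alpha> k * softmax X (\<Theta> k) j)"

(* omega = (alpha, theta_1..theta_K) with alpha in the simplex, theta_k in R^L *)
definition in_param :: "real mat \<Rightarrow> nat \<Rightarrow> (nat \<Rightarrow> real) \<Rightarrow> (nat \<Rightarrow> real vec) \<Rightarrow> bool" where
  "in_param X K \<alpha> \<Theta> \<longleftrightarrow> (\<forall>k<K. 0 \<le> \<alpha> k) \<and> sum \<alpha> {..<K} = 1 \<and>
     (\<forall>k<K. \<Theta> k \<in> carrier_vec (dim_col X))"

definition loglik :: "real mat \<Rightarrow> nat \<Rightarrow> (nat \<Rightarrow> real) \<Rightarrow> (nat \<Rightarrow> real vec)
     \<Rightarrow> (nat \<Rightarrow> real) \<Rightarrow> (nat \<Rightarrow> real vec) \<Rightarrow> real" where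
  "loglik X K \<alpha>s \<Theta>s \<alpha> \<Theta> = (\<Sum>j<dim_row X. mixture X K \<alpha>s \<Theta>s j * ln (mixture X K \<alpha> \<Theta> j))"

definition in_Omega_star :: "real mat \<Rightarrow> nat \<Rightarrow> (nat \<Rightarrow> real) \<Rightarrow> (nat \<Rightarrow> real vec)
     \<Rightarrow> (nat \<Rightarrow> real) \<Rightarrow> (nat \<Rightarrow> real vec) \<Rightarrow> bool" where
  "in_Omega_star X K \<alpha>s \<Theta>s \<alpha> \<Theta> \<longleftrightarrow> in_param X K \<alpha> \<Theta> \<and>
     (\<forall>\<alpha>' \<Theta>'. in_param X K \<alpha>' \<Theta>' \<longrightarrow> loglik X K \<alpha>s \<Theta>s \<alpha>' \<Theta>' \<le> loglik X K \<alpha>s \<Theta>s \<alpha> \<Theta>)"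

(* Assumption (A) with constants sl2 = underline sigma^2, su2 = overline sigma^2, vs2 = varsigma^2 *)
definition assumption_A :: "real mat \<Rightarrow> nat \<Rightarrow> (nat \<Rightarrow> real) \<Rightarrow> (nat \<Rightarrow> real vec)
     \<Rightarrow> real \<Rightarrow> real \<Rightarrow> real \<Rightarrow> bool" where
  "assumption_A X K \<alpha>s \<Theta>s sl2 su2 vs2 \<longleftrightarrow> 0 < sl2 \<and> sl2 \<le> su2 \<and>
     (\<forall>\<alpha>' \<Theta>'. in_Omega_star X K \<alpha>s \<Theta>s \<alpha>' \<Theta>' \<longrightarrow>
        (\<forall>a<K. \<forall>b<K. \<forall>u::real. 0 \<le> u \<and> u \<le> 1 \<longrightarrow>
           (let \<theta> = u \<cdot>\<^sub>v \<Theta>' a + (1 - u) \<cdot>\<^sub>v \<Theta>' b in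
              sl2 \<le> lam_min (Hmat X \<theta>) \<and> lam_min (Hmat X \<theta>) \<le> lam_max (Hmat X \<theta>) \<and>
              lam_max (Hmat X \<theta>) \<le> su2 \<and>
              lam_max (inv_sqrt (Hmat X \<theta>) * Mmat X \<theta> * inv_sqrt (Hmat X \<theta>)) \<le> vs2)))"

end

theory Submission
  imports Defs "Jordan_Normal_Form.Schur_Decomposition"
begin

lemma CS_sum:
  fixes a b :: "nat \<Rightarrow> real"
  shows "(\<Sum>i\<in>I. a i * b i)\<^sup>2 \<le> (\<Sum>i\<in>I. (a i)\<^sup>2) * (\<Sum>i\<in>I. (b i)\<^sup>2)"
proof (cases "(\<Sum>i\<in>I. (b i)\<^sup>2) > 0")
  case False
  then consider "\<And>i. i\<in>I \<Longrightarrow> b i = 0" | "infinite I"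
    by (metis (mono_tags, lifting) sum_pos2 zero_le_power2 zero_less_power2)
  thus ?thesis
    by fastforce
next
  case True
  define r where "r \<equiv> (\<Sum>i\<in>I. a i * b i) / (\<Sum>i\<in>I. (b i)\<^sup>2)"
  have "0 \<le> (\<Sum>i\<in>I. (a i - r * b i)\<^sup>2)"
    by (simp add: sum_nonneg)
  also have "... = (\<Sum>i\<in>I. (a i)\<^sup>2) - 2 * r * (\<Sum>i\<in>I. a i * b i) + r\<^sup>2 * (\<Sum>i\<in>I. (b i)\<^sup>2)"
  proof -
    have "(\<Sum>i\<in>I. (a i - r * b i)\<^sup>2) = (\<Sum>i\<in>I. (a i)\<^sup>2 - 2 * r * (a i * b i) + r\<^sup>2 * (b i)\<^sup>2)"
      by (rule sum.cong) (auto simp: power2_eq_square algebra_simps)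
    also have "\<dots> = (\<Sum>i\<in>I. (a i)\<^sup>2) - 2 * r * (\<Sum>i\<in>I. a i * b i) + r\<^sup>2 * (\<Sum>i\<in>I. (b i)\<^sup>2)"
      by (simp add: sum.distrib sum_subtractf sum_distrib_left)
    finally show ?thesis .
  qed
  also have "\<dots> = (\<Sum>i\<in>I. (a i)\<^sup>2) - ((\<Sum>i\<in>I. a i * b i))\<^sup>2 / (\<Sum>i\<in>I. (b i)\<^sup>2)"
    by (simp add: r_def power2_eq_square)
  finally have "((\<Sum>i\<in>I. a i * b i))\<^sup>2 / (\<Sum>i\<in>I. (b i)\<^sup>2) \<le> (\<Sum>i\<in>I. (a i)\<^sup>2)"
    by (simp add: le_diff_eq)
  thus ?thesis
    by (simp add: pos_divide_le_eq True)
qed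

lemma vnorm_CS:
  fixes x d :: "real vec"
  assumes "x \<in> carrier_vec n" "d \<in> carrier_vec n"
  shows "\<bar>x \<bullet> d\<bar> \<le> vnorm x * vnorm d"
proof -
  have xd: "x \<bullet> d = (\<Sum>i<n. x$i * d$i)" using assms by (simp add: scalar_prod_def lessThan_atLeast0)
  have xx: "x \<bullet> x = (\<Sum>i<n. (x$i)\<^sup>2)" using assms by (simp add: scalar_prod_def lessThan_atLeast0 power2_eq_square)
  have dd: "d \<bullet> d = (\<Sum>i<n. (d$i)\<^sup>2)" using assms by (simp add: scalar_prod_def lessThan_atLeast0 power2_eq_square)
  have "(x \<bullet> d)\<^sup>2 \<le> (x \<bullet> x) * (d \<bullet> d)" unfolding xd xx dd by (rule CS_sum)
  hence "sqrt ((x \<bullet> d)\<^sup>2) \<le> sqrt ((x \<bullet> x) * (d \<bullet> d))" by (rule real_sqrt_le_mono)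
  thus ?thesis unfolding vnorm_def by (simp add: real_sqrt_mult)
qed

lemma scalar_self_nonneg: "(v::real vec) \<bullet> v \<ge> 0"
  by (simp add: scalar_prod_def sum_nonneg)

lemma scalar_self_zero: assumes "(v::real vec) \<in> carrier_vec n" "v \<bullet> v = 0" shows "v = 0\<^sub>v n"
proof (rule eq_vecI)
  show "dim_vec v = dim_vec (0\<^sub>v n)" using assms by simp
  fix i assume i: "i < dim_vec (0\<^sub>v n)"
  have "(\<Sum>j\<in>{0..<n}. v$j * v$j) = 0" using assms by (simp add: scalar_prod_def)
  hence "\<forall>j\<in>{0..<n}. v$j * v$j = 0" by (subst (asm) sum_nonneg_eq_0_iff) auto
  thus "v $ i = 0\<^sub>v n $ i" using i by auto
qed

lemma scalar_self_pos: assumes "(v::real vec) \<in> carrier_vec n" "v \<noteq> 0\<^sub>v n" shows "v \<bullet> v > 0"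
  using scalar_self_nonneg[of v] scalar_self_zero[OF assms(1)] assms(2) by force

lemma sym_swap:
  fixes A :: "real mat"
  assumes A: "A \<in> carrier_mat n n" and S: "transpose_mat A = A"
    and x: "x \<in> carrier_vec n" and y: "y \<in> carrier_vec n"
  shows "x \<bullet> (A *\<^sub>v y) = y \<bullet> (A *\<^sub>v x)"
proof -
  have "(transpose_mat A *\<^sub>v x) \<bullet> y = x \<bullet> (A *\<^sub>v y)" by (rule transpose_vec_mult_scalar[OF A y x])
  hence "(A *\<^sub>v x) \<bullet> y = x \<bullet> (A *\<^sub>v y)" using S by simp
  moreover have "(A *\<^sub>v x) \<bullet> y = y \<bullet> (A *\<^sub>v x)" by (rule comm_scalar_prod[of _ n], insert A x y, auto)
  ultimately show ?thesis by simp
qed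

lemma sym_eigenvalue_exists:
  fixes A :: "real mat"
  assumes A: "A \<in> carrier_mat n n" and S: "transpose_mat A = A" and n: "n > 0"
  shows "\<exists>k. eigenvalue A k"
proof -
  let ?C = "map_mat complex_of_real A"
  have C: "?C \<in> carrier_mat n n" using A by simp
  have deg: "degree (char_poly ?C) = n" using degree_monic_char_poly[OF C] by simp
  have "\<not> constant (poly (char_poly ?C))" using deg n by (simp add: constant_degree)
  then obtain a where a: "poly (char_poly ?C) a = 0" using fundamental_theorem_of_algebra by blast
  hence "eigenvalue ?C a" using eigenvalue_root_char_poly[OF C] by simp
  then obtain v where ev: "eigenvector ?C v a" unfolding eigenvalue_def by blast
  hence v: "v \<in> carrier_vec n" and v0: "v \<noteq> 0\<^sub>v n" and Cv: "?C *\<^sub>v v = a \<cdot>\<^sub>v v"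
    unfolding eigenvector_def using A by auto
  have comp: "(\<Sum>j<n. complex_of_real (A $$ (i,j)) * v$j) = a * v$i" if i: "i < n" for i
  proof -
    have "(?C *\<^sub>v v) $ i = a * v $ i" using Cv i v by simp
    moreover have "(?C *\<^sub>v v) $ i = (\<Sum>j<n. complex_of_real (A $$ (i,j)) * v$j)"
      using i A v by (simp add: scalar_prod_def lessThan_atLeast0 row_def)
    ultimately show ?thesis by simp
  qed
  define s where "s = (\<Sum>i<n. \<Sum>j<n. cnj (v$i) * complex_of_real (A $$ (i,j)) * v$j)"
  define N where "N = (\<Sum>i<n. cnj (v$i) * v$i)"
  have s1: "s = a * N"
  proof -
    have "s = (\<Sum>i<n. cnj (v$i) * (\<Sum>j<n. complex_of_real (A $$ (i,j)) * v$j))"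
      unfolding s_def by (simp add: sum_distrib_left mult.assoc)
    also have "\<dots> = (\<Sum>i<n. cnj (v$i) * (a * v$i))" by (rule sum.cong, auto simp: comp)
    also have "\<dots> = a * N" unfolding N_def by (simp add: sum_distrib_left algebra_simps)
    finally show ?thesis .
  qed
  have Asym: "A $$ (i,j) = A $$ (j,i)" if "i < n" "j < n" for i j
  proof -
    have "transpose_mat A $$ (j,i) = A $$ (i,j)" using that A by simp
    thus ?thesis using S by simp
  qed
  have s2: "cnj s = s"
  proof -
    have "cnj s = (\<Sum>i<n. \<Sum>j<n. v$i * complex_of_real (A $$ (i,j)) * cnj (v$j))"
      unfolding s_def by simp
    also have "\<dots> = (\<Sum>j<n. \<Sum>i<n. v$i * complex_of_real (A $$ (i,j)) * cnj (v$j))"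
      by (rule sum.swap)
    also have "\<dots> = s" unfolding s_def
      by (rule sum.cong[OF refl], rule sum.cong[OF refl], auto simp: Asym mult.commute mult.left_commute)
    finally show ?thesis .
  qed
  have N: "N = complex_of_real (\<Sum>i<n. (cmod (v$i))\<^sup>2)"
  proof -
    have "cnj (v$i) * v$i = complex_of_real ((cmod (v$i))\<^sup>2)" for i
      by (metis complex_norm_square mult.commute)
    thus ?thesis unfolding N_def of_real_sum by simp
  qed
  have "\<exists>i<n. v$i \<noteq> 0"
  proof (rule ccontr)
    assume "\<not> (\<exists>i<n. v$i \<noteq> 0)"
    hence "v = 0\<^sub>v n" using v by (intro eq_vecI, auto)
    thus False using v0 by simp
  qed
  then obtain i where i: "i < n" "v$i \<noteq> 0" by blast
  have "(\<Sum>i<n. (cmod (v$i))\<^sup>2) > 0"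
    by (rule sum_pos2[of _ i], insert i, auto)
  hence N0: "N \<noteq> 0" unfolding N by (metis of_real_eq_0_iff order_less_irrefl)
  have cN: "cnj N = N" unfolding N by simp
  have "cnj s = cnj a * cnj N" using s1 by simp
  hence "cnj a * N = a * N" using s1 s2 cN by simp
  hence aa: "cnj a = a" using N0 by simp
  have "Im (cnj a) = Im a" using aa by simp
  hence "Im a = 0" by simp
  hence are: "a = complex_of_real (Re a)" by (simp add: complex_eq_iff)
  have "poly (char_poly ?C) (complex_of_real (Re a)) = 0" using a are by metis
  hence "poly (map_poly complex_of_real (char_poly A)) (complex_of_real (Re a)) = 0"
    unfolding of_real_hom.char_poly_hom[OF A] .
  hence "complex_of_real (poly (char_poly A) (Re a)) = 0" by (simp only: of_real_hom.poly_map_poly)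
  hence "poly (char_poly A) (Re a) = 0" by simp
  thus ?thesis using eigenvalue_root_char_poly[OF A] by blast
qed

lemma orth_ext:
  fixes v :: "real vec"
  assumes v: "v \<in> carrier_vec n" and v1: "v \<bullet> v = 1"
  shows "\<exists>W. W \<in> carrier_mat n n \<and> transpose_mat W * W = 1\<^sub>m n \<and> col W 0 = v"
proof -
  have v0: "v \<noteq> 0\<^sub>v n" using v1 by auto
  interpret cof_vec_space n "TYPE(real)" .
  define b where "b = basis_completion v"
  from basis_completion[OF v v0, folded b_def]
  have dist_b: "distinct b" 
    and indep: "\<not> lin_dep (set b)" and b: "set b \<subseteq> carrier_vec n" and hdb: "hd b = v" 
    and len_b: "length b = n" by auto
  have n: "n > 0" using v0 v by (cases n, auto)
  from hdb len_b n obtain vs where bv: "b = v # vs" by (cases b, auto)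
  define ws where "ws = gram_schmidt n b"
  from gram_schmidt_result[OF b dist_b indep refl, folded ws_def]
  have ws: "set ws \<subseteq> carrier_vec n" "corthogonal ws" "length ws = n" 
    by (auto simp: len_b)
  from gram_schmidt_hd[OF v, of vs, folded bv] have hdws: "hd ws = v" unfolding ws_def .
  define us where "us = map (\<lambda>w. (1 / sqrt (w \<bullet> w)) \<cdot>\<^sub>v w) ws"
  define W where "W = mat_of_cols n us"
  have lus: "length us = n" unfolding us_def using ws by simp
  have wsi: "ws ! i \<in> carrier_vec n" if "i < n" for i using ws that by auto
  have usi: "us ! i = (1 / sqrt (ws!i \<bullet> ws!i)) \<cdot>\<^sub>v ws!i" if "i < n" for i
    unfolding us_def using that ws by simp
  have usc: "us ! i \<in> carrier_vec n" if "i < n" for i using usi[OF that] wsi[OF that] by simp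
  have orth: "(ws!i \<bullet> ws!j = 0) = (i \<noteq> j)" if "i < n" "j < n" for i j
    using ws(2) that ws(3) unfolding corthogonal_def by (simp add: scalar_prod_def)
  have Wc: "W \<in> carrier_mat n n" unfolding W_def using mat_of_cols_carrier(1)[of n us] lus by simp
  have colW: "col W i = us ! i" if "i < n" for i
    unfolding W_def using that lus usc by (subst col_mat_of_cols, auto)
  have "us ! i \<bullet> us ! j = (if i = j then 1 else 0)" if i: "i < n" and j: "j < n" for i j
  proof -
    have "us ! i \<bullet> us ! j = (1 / sqrt (ws!i \<bullet> ws!i)) * (1 / sqrt (ws!j \<bullet> ws!j)) * (ws!i \<bullet> ws!j)"
      unfolding usi[OF i] usi[OF j] using wsi[OF i] wsi[OF j] by simp
    moreover have "ws!i \<bullet> ws!i > 0" using orth[OF i i] scalar_self_nonneg[of "ws!i"] by simp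
    ultimately show ?thesis using orth[OF i j]
      by (cases "i = j", auto simp: field_simps)
  qed
  hence "transpose_mat W * W = 1\<^sub>m n"
    using Wc colW by (intro eq_matI, auto)
  moreover have "col W 0 = v"
  proof -
    have "ws ! 0 = v" using hdws ws(3) n by (cases ws, auto)
    thus ?thesis using colW[OF n] usi[OF n] v1 by simp
  qed
  ultimately show ?thesis using Wc by blast
qed

lemma diagm_carrier: "diagm n d \<in> carrier_mat n n"
  unfolding diagm_def by simp

lemma diagm_transpose[simp]: "transpose_mat (diagm n d) = diagm n d"
  unfolding diagm_def by (intro eq_matI, auto)

lemma mult_left_inv_cancel:
  fixes A B X :: "'a::comm_ring_1 mat"
  assumes "A \<in> carrier_mat n n" "B \<in> carrier_mat n n" "X \<in> carrier_mat n k" "A * B = 1\<^sub>m n"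
  shows "A * (B * X) = X"
proof -
  have "A * (B * X) = (A * B) * X" by (rule assoc_mult_mat[symmetric, OF assms(1-3)])
  thus ?thesis using assms by simp
qed

lemma mult_right_inv_cancel:
  fixes A B X :: "'a::comm_ring_1 mat"
  assumes "A \<in> carrier_mat n n" "B \<in> carrier_mat n n" "X \<in> carrier_mat k n" "A * B = 1\<^sub>m n"
  shows "X * A * B = X"
proof -
  have "X * A * B = X * (A * B)" by (rule assoc_mult_mat[OF assms(3,1,2)])
  thus ?thesis using assms by simp
qed

lemma spectral:
  fixes A :: "real mat"
  assumes "A \<in> carrier_mat n n" "transpose_mat A = A"
  shows "\<exists>U d. U \<in> carrier_mat n n \<and> transpose_mat U * U = 1\<^sub>m n \<and> A = U * diagm n d * transpose_mat U"
  using assms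
proof (induct n arbitrary: A)
  case 0
  show ?case
    by (rule exI[of _ "1\<^sub>m 0"], rule exI[of _ "\<lambda>_. 0"], insert 0, auto intro!: eq_matI)
next
  case (Suc m A)
  define n where "n = Suc m"
  have A: "A \<in> carrier_mat n n" and S: "transpose_mat A = A" using Suc n_def by auto
  obtain \<alpha> where "eigenvalue A \<alpha>" using sym_eigenvalue_exists[OF A S] n_def by auto
  then obtain v0 where "eigenvector A v0 \<alpha>" unfolding eigenvalue_def by blast
  hence v0: "v0 \<in> carrier_vec n" "v0 \<noteq> 0\<^sub>v n" "A *\<^sub>v v0 = \<alpha> \<cdot>\<^sub>v v0"
    unfolding eigenvector_def using A by auto
  define q where "q = v0 \<bullet> v0"
  have q: "q > 0" unfolding q_def by (rule scalar_self_pos[OF v0(1,2)])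
  define v where "v = (1 / sqrt q) \<cdot>\<^sub>v v0"
  have v: "v \<in> carrier_vec n" unfolding v_def using v0 by simp
  have v1: "v \<bullet> v = 1" unfolding v_def using v0(1) q by (simp add: q_def[symmetric])
  have Av: "A *\<^sub>v v = \<alpha> \<cdot>\<^sub>v v"
    unfolding v_def mult_mat_vec[OF A v0(1)] v0(3) by (intro eq_vecI, auto)
  obtain W where W: "W \<in> carrier_mat n n" and WtW: "transpose_mat W * W = 1\<^sub>m n" and W0: "col W 0 = v"
    using orth_ext[OF v v1] by blast
  have Wt: "transpose_mat W \<in> carrier_mat n n" using W by simp
  have WWt: "W * transpose_mat W = 1\<^sub>m n" by (rule mat_mult_left_right_inverse[OF Wt W WtW])
  define B where "B = transpose_mat W * A * W"
  have B: "B \<in> carrier_mat n n" unfolding B_def using W A by simp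
  have BS: "transpose_mat B = B"
  proof -
    have "transpose_mat B = transpose_mat W * transpose_mat (transpose_mat W * A)"
      unfolding B_def by (rule transpose_mult[of _ n n], insert W A, auto)
    also have "transpose_mat (transpose_mat W * A) = transpose_mat A * W"
      by (subst transpose_mult[of _ n n], insert W A, auto)
    finally show ?thesis unfolding B_def using S W A by simp
  qed
  have colB: "col B 0 = \<alpha> \<cdot>\<^sub>v unit_vec n 0"
  proof -
    have "col B 0 = (transpose_mat W * A) *\<^sub>v col W 0"
      unfolding B_def by (rule col_mult2[of _ n n], insert W A, auto simp: n_def)
    also have "\<dots> = transpose_mat W *\<^sub>v (A *\<^sub>v v)" unfolding W0 using W A v by simp
    also have "\<dots> = \<alpha> \<cdot>\<^sub>v (transpose_mat W *\<^sub>v v)" unfolding Av by (rule mult_mat_vec[OF Wt v])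
    also have "transpose_mat W *\<^sub>v v = col (transpose_mat W * W) 0"
      unfolding W0[symmetric] by (rule col_mult2[symmetric, of _ n n], insert W, auto simp: n_def)
    also have "\<dots> = unit_vec n 0" unfolding WtW by (simp add: n_def)
    finally show ?thesis .
  qed
  have B0: "B $$ (i, 0) = (if i = 0 then \<alpha> else 0)" if "i < n" for i
  proof -
    have "B $$ (i, 0) = col B 0 $ i" using that B by (simp add: n_def)
    thus ?thesis unfolding colB using that by simp
  qed
  have B0': "B $$ (0, j) = (if j = 0 then \<alpha> else 0)" if "j < n" for j
  proof -
    have "B $$ (0, j) = transpose_mat B $$ (j, 0)" using that B by (simp add: n_def)
    thus ?thesis using BS B0[OF that] by simp
  qed
  define A3 where "A3 = mat m m (\<lambda>(i,j). B $$ (Suc i, Suc j))"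
  have A3: "A3 \<in> carrier_mat m m" unfolding A3_def by simp
  have A3S: "transpose_mat A3 = A3"
  proof (rule eq_matI)
    fix i j assume "i < dim_row A3" "j < dim_col A3"
    hence ij: "i < m" "j < m" unfolding A3_def by auto
    have "B $$ (Suc j, Suc i) = transpose_mat B $$ (Suc i, Suc j)" using ij B by (simp add: n_def)
    thus "transpose_mat A3 $$ (i, j) = A3 $$ (i, j)" using BS ij unfolding A3_def by simp
  qed (auto simp: A3_def)
  obtain U3 d3 where U3: "U3 \<in> carrier_mat m m" and U3t: "transpose_mat U3 * U3 = 1\<^sub>m m"
    and A3U: "A3 = U3 * diagm m d3 * transpose_mat U3"
    using Suc(1)[OF A3 A3S] by blast
  define F where "F = four_block_mat (1\<^sub>m 1) (0\<^sub>m 1 m) (0\<^sub>m m 1) U3"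
  define D3 where "D3 = diagm m d3"
  define \<Lambda> where "\<Lambda> = mat 1 1 (\<lambda>_. \<alpha>)"
  define d where "d = (\<lambda>i. if i = 0 then \<alpha> else d3 (i - 1))"
  define U where "U = W * F"
  have D3: "D3 \<in> carrier_mat m m" unfolding D3_def by (rule diagm_carrier)
  have L: "\<Lambda> \<in> carrier_mat 1 1" unfolding \<Lambda>_def by simp
  have F: "F \<in> carrier_mat n n" unfolding F_def n_def using U3
    by (metis four_block_carrier_mat one_carrier_mat plus_1_eq_Suc)
  have Ft: "transpose_mat F = four_block_mat (1\<^sub>m 1) (0\<^sub>m 1 m) (0\<^sub>m m 1) (transpose_mat U3)"
    unfolding F_def by (subst transpose_four_block_mat[of _ 1 1 _ m _ m], insert U3, auto)
  have FtF: "transpose_mat F * F = 1\<^sub>m n"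
  proof -
    have "transpose_mat F * F = four_block_mat (1\<^sub>m 1) (0\<^sub>m 1 m) (0\<^sub>m m 1) (transpose_mat U3 * U3)"
      unfolding Ft unfolding F_def
      by (subst mult_four_block_mat[of _ 1 1 _ m _ m _ _ 1 _ m], insert U3, auto)
    thus ?thesis unfolding U3t n_def by simp
  qed
  have Dblock: "diagm n d = four_block_mat \<Lambda> (0\<^sub>m 1 m) (0\<^sub>m m 1) D3"
    unfolding n_def \<Lambda>_def D3_def d_def diagm_def by (intro eq_matI, auto)
  have Bblock: "B = four_block_mat \<Lambda> (0\<^sub>m 1 m) (0\<^sub>m m 1) A3"
  proof (rule eq_matI)
    fix i j assume "i < dim_row (four_block_mat \<Lambda> (0\<^sub>m 1 m) (0\<^sub>m m 1) A3)"
      "j < dim_col (four_block_mat \<Lambda> (0\<^sub>m 1 m) (0\<^sub>m m 1) A3)"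
    hence ij: "i < n" "j < n" using L A3 by (auto simp: n_def)
    show "B $$ (i, j) = four_block_mat \<Lambda> (0\<^sub>m 1 m) (0\<^sub>m m 1) A3 $$ (i, j)"
      using ij B0 B0' L A3 unfolding \<Lambda>_def A3_def n_def
      by (cases "i = 0"; cases "j = 0", auto)
  qed (insert B L A3, auto simp: n_def)
  have FDF: "F * diagm n d * transpose_mat F = B"
  proof -
    have "F * diagm n d = four_block_mat \<Lambda> (0\<^sub>m 1 m) (0\<^sub>m m 1) (U3 * D3)"
      unfolding F_def Dblock
      by (subst mult_four_block_mat[of _ 1 1 _ m _ m _ _ 1 _ m], insert U3 D3 L, auto)
    hence "F * diagm n d * transpose_mat F = four_block_mat \<Lambda> (0\<^sub>m 1 m) (0\<^sub>m m 1) (U3 * D3) *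
        four_block_mat (1\<^sub>m 1) (0\<^sub>m 1 m) (0\<^sub>m m 1) (transpose_mat U3)"
      unfolding Ft by simp
    also have "\<dots> = four_block_mat \<Lambda> (0\<^sub>m 1 m) (0\<^sub>m m 1) (U3 * D3 * transpose_mat U3)"
      by (subst mult_four_block_mat[of _ 1 1 _ m _ m _ _ 1 _ m], insert U3 D3 L, auto)
    finally have "F * diagm n d * transpose_mat F = four_block_mat \<Lambda> (0\<^sub>m 1 m) (0\<^sub>m m 1) (U3 * D3 * transpose_mat U3)" .
    thus ?thesis unfolding Bblock A3U D3_def by simp
  qed
  have Ut: "transpose_mat U = transpose_mat F * transpose_mat W"
    unfolding U_def by (rule transpose_mult[OF W F])
  have U: "U \<in> carrier_mat n n" unfolding U_def using W F by simp
  have "transpose_mat U * U = 1\<^sub>m n"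
  proof -
    have "transpose_mat U * U = transpose_mat F * (transpose_mat W * (W * F))"
      unfolding Ut unfolding U_def
      by (rule assoc_mult_mat[OF _ Wt mult_carrier_mat[OF W F]], insert F, simp)
    also have "transpose_mat W * (W * F) = F" by (rule mult_left_inv_cancel[OF Wt W F WtW])
    finally show ?thesis using FtF by simp
  qed
  moreover have "A = U * diagm n d * transpose_mat U"
  proof -
    have "U * diagm n d * transpose_mat U = W * (F * diagm n d * transpose_mat F) * transpose_mat W"
    proof -
      have Dc: "diagm n d \<in> carrier_mat n n" by (rule diagm_carrier)
      have FD: "F * diagm n d \<in> carrier_mat n n" using F Dc by (rule mult_carrier_mat)
      have Ftc: "transpose_mat F \<in> carrier_mat n n" using F by simp
      have FtWt: "transpose_mat F * transpose_mat W \<in> carrier_mat n n" using Ftc Wt by (rule mult_carrier_mat)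
      have P: "F * diagm n d * transpose_mat F \<in> carrier_mat n n" using FD Ftc by (rule mult_carrier_mat)
      show ?thesis unfolding Ut unfolding U_def
        by (simp only: assoc_mult_mat[OF W F Dc] assoc_mult_mat[OF W FD FtWt]
          assoc_mult_mat[symmetric, OF FD Ftc Wt] assoc_mult_mat[symmetric, OF W P Wt])
    qed
    also have "\<dots> = W * B * transpose_mat W" unfolding FDF ..
    also have "\<dots> = W * (transpose_mat W * A * W) * transpose_mat W" unfolding B_def ..
    also have "\<dots> = (W * (transpose_mat W * A)) * (W * transpose_mat W)"
    proof -
      have Cc: "transpose_mat W * A \<in> carrier_mat n n" using Wt A by (rule mult_carrier_mat)
      have WC: "W * (transpose_mat W * A) \<in> carrier_mat n n" using W Cc by (rule mult_carrier_mat)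
      show ?thesis
        by (simp only: assoc_mult_mat[symmetric, OF W Cc W] assoc_mult_mat[OF WC W Wt])
    qed
    also have "\<dots> = A" unfolding WWt using mult_left_inv_cancel[OF W Wt A WWt] A by simp
    finally show ?thesis by simp
  qed
  ultimately show ?case using U unfolding n_def by blast
qed

lemma mv3:
  assumes A: "A \<in> carrier_mat a b" and B: "B \<in> carrier_mat b c" and C: "C \<in> carrier_mat c d"
    and v: "v \<in> carrier_vec d"
  shows "(A * B * C) *\<^sub>v v = A *\<^sub>v (B *\<^sub>v (C *\<^sub>v v))"
proof -
  have AB: "A * B \<in> carrier_mat a c" using A B by (rule mult_carrier_mat)
  have Cv: "C *\<^sub>v v \<in> carrier_vec c" using C v by (rule mult_mat_vec_carrier)
  have "(A * B * C) *\<^sub>v v = (A * B) *\<^sub>v (C *\<^sub>v v)" by (rule assoc_mult_mat_vec[OF AB C v])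
  also have "\<dots> = A *\<^sub>v (B *\<^sub>v (C *\<^sub>v v))" by (rule assoc_mult_mat_vec[OF A B Cv])
  finally show ?thesis .
qed

lemma mat_vec_zero:
  fixes A :: "'a::comm_ring_1 mat"
  assumes "A \<in> carrier_mat nr n"
  shows "A *\<^sub>v 0\<^sub>v n = 0\<^sub>v nr"
  using assms by (intro eq_vecI, auto simp: scalar_prod_def)

lemma UdU_carrier:
  assumes U: "U \<in> carrier_mat n n"
  shows "U * diagm n d * transpose_mat U \<in> carrier_mat n n"
proof -
  have "U * diagm n d \<in> carrier_mat n n" using U diagm_carrier by (rule mult_carrier_mat)
  moreover have "transpose_mat U \<in> carrier_mat n n" using U by simp
  ultimately show ?thesis by (rule mult_carrier_mat)
qed

lemma diagm_mult_vec: "w \<in> carrier_vec n \<Longrightarrow> diagm n e *\<^sub>v w = vec n (\<lambda>i. e i * w $ i)"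
proof (rule eq_vecI)
  fix i assume w: "w \<in> carrier_vec n" and i: "i < dim_vec (vec n (\<lambda>i. e i * w $ i))"
  hence i': "i < n" by simp
  have "(diagm n e *\<^sub>v w) $ i = (\<Sum>j\<in>{0..<n}. (if i = j then e i else 0) * w $ j)"
    using w i' by (simp add: diagm_def scalar_prod_def row_def)
  also have "\<dots> = (\<Sum>j\<in>{0..<n}. if i = j then e i * w $ j else 0)"
    by (rule sum.cong, auto)
  also have "\<dots> = e i * w $ i" using i' by simp
  finally show "(diagm n e *\<^sub>v w) $ i = vec n (\<lambda>i. e i * w $ i) $ i" using i' by simp
qed (auto simp: diagm_def)

lemma quad_UdU:
  fixes U :: "real mat"
  assumes U: "U \<in> carrier_mat n n" and v: "v \<in> carrier_vec n"
  shows "v \<bullet> ((U * diagm n e * transpose_mat U) *\<^sub>v v) = (\<Sum>i<n. e i * ((transpose_mat U *\<^sub>v v) $ i)\<^sup>2)"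
proof -
  define w where "w = transpose_mat U *\<^sub>v v"
  have w: "w \<in> carrier_vec n" unfolding w_def using U v by simp
  have "(U * diagm n e * transpose_mat U) *\<^sub>v v = U *\<^sub>v (diagm n e *\<^sub>v w)"
    unfolding w_def by (rule mv3[OF U diagm_carrier _ v], insert U, simp)
  moreover have Dw: "diagm n e *\<^sub>v w \<in> carrier_vec n" by (rule mult_mat_vec_carrier[OF diagm_carrier w])
  ultimately have "v \<bullet> ((U * diagm n e * transpose_mat U) *\<^sub>v v) = w \<bullet> (diagm n e *\<^sub>v w)"
    using transpose_vec_mult_scalar[OF U Dw v] unfolding w_def by simp
  also have "\<dots> = (\<Sum>i<n. w $ i * (e i * w $ i))"
    unfolding diagm_mult_vec[OF w] using w by (simp add: scalar_prod_def lessThan_atLeast0)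
  also have "\<dots> = (\<Sum>i<n. e i * (w $ i)\<^sup>2)" by (rule sum.cong, auto simp: power2_eq_square)
  finally show ?thesis unfolding w_def .
qed

lemma norm_Ut:
  fixes U :: "real mat"
  assumes U: "U \<in> carrier_mat n n" and UtU: "transpose_mat U * U = 1\<^sub>m n" and v: "v \<in> carrier_vec n"
  shows "(\<Sum>i<n. ((transpose_mat U *\<^sub>v v) $ i)\<^sup>2) = v \<bullet> v"
proof -
  have Ut: "transpose_mat U \<in> carrier_mat n n" using U by simp
  have UUt: "U * transpose_mat U = 1\<^sub>m n" by (rule mat_mult_left_right_inverse[OF Ut U UtU])
  define w where "w = transpose_mat U *\<^sub>v v"
  have w: "w \<in> carrier_vec n" unfolding w_def using U v by simp
  have "w \<bullet> w = v \<bullet> (U *\<^sub>v w)"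
    using transpose_vec_mult_scalar[OF U w v] unfolding w_def by simp
  also have "U *\<^sub>v w = (U * transpose_mat U) *\<^sub>v v" unfolding w_def using U v by simp
  also have "\<dots> = v" unfolding UUt using v by simp
  finally have "w \<bullet> w = v \<bullet> v" .
  moreover have "w \<bullet> w = (\<Sum>i<n. (w $ i)\<^sup>2)"
    using w by (simp add: scalar_prod_def lessThan_atLeast0 power2_eq_square)
  ultimately show ?thesis unfolding w_def by simp
qed

lemma eig_UdU:
  fixes U :: "real mat"
  assumes U: "U \<in> carrier_mat n n" and UtU: "transpose_mat U * U = 1\<^sub>m n"
    and A: "A = U * diagm n d * transpose_mat U"
  shows "eigenvalue A k \<longleftrightarrow> (\<exists>i<n. d i = k)"
proof
  have Ut: "transpose_mat U \<in> carrier_mat n n" using U by simp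
  have UUt: "U * transpose_mat U = 1\<^sub>m n" by (rule mat_mult_left_right_inverse[OF Ut U UtU])
  have Ac: "A \<in> carrier_mat n n" unfolding A by (rule UdU_carrier[OF U])
  {
    assume "eigenvalue A k"
    then obtain v where "eigenvector A v k" unfolding eigenvalue_def by blast
    hence v: "v \<in> carrier_vec n" "v \<noteq> 0\<^sub>v n" "A *\<^sub>v v = k \<cdot>\<^sub>v v"
      unfolding eigenvector_def using Ac by auto
    define w where "w = transpose_mat U *\<^sub>v v"
    have w: "w \<in> carrier_vec n" unfolding w_def using U v by simp
    have Uw: "U *\<^sub>v w = v"
    proof -
      have "U *\<^sub>v w = (U * transpose_mat U) *\<^sub>v v" unfolding w_def using U v by simp
      also have "\<dots> = v" unfolding UUt using v by simp
      finally show ?thesis .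
    qed
    have "\<exists>i<n. w $ i \<noteq> 0"
    proof (rule ccontr)
      assume "\<not> (\<exists>i<n. w $ i \<noteq> 0)"
      hence "w = 0\<^sub>v n" using w by (intro eq_vecI, auto)
      hence "v = 0\<^sub>v n" using Uw mat_vec_zero[OF U] by simp
      thus False using v by simp
    qed
    then obtain i where i: "i < n" "w $ i \<noteq> 0" by blast
    have "transpose_mat U *\<^sub>v (A *\<^sub>v v) = diagm n d *\<^sub>v w"
    proof -
      have Dw: "diagm n d *\<^sub>v w \<in> carrier_vec n" by (rule mult_mat_vec_carrier[OF diagm_carrier w])
      have "A *\<^sub>v v = U *\<^sub>v (diagm n d *\<^sub>v w)" unfolding A w_def by (rule mv3[OF U diagm_carrier Ut v(1)])
      hence "transpose_mat U *\<^sub>v (A *\<^sub>v v) = (transpose_mat U * U) *\<^sub>v (diagm n d *\<^sub>v w)"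
        using assoc_mult_mat_vec[OF Ut U Dw] by simp
      thus ?thesis unfolding UtU using Dw by simp
    qed
    moreover have "transpose_mat U *\<^sub>v (A *\<^sub>v v) = k \<cdot>\<^sub>v w"
      unfolding v(3) w_def by (rule mult_mat_vec[OF Ut v(1)])
    ultimately have "diagm n d *\<^sub>v w = k \<cdot>\<^sub>v w" by simp
    hence "(diagm n d *\<^sub>v w) $ i = (k \<cdot>\<^sub>v w) $ i" by simp
    hence "d i * w $ i = k * w $ i" unfolding diagm_mult_vec[OF w] using i w by simp
    hence "d i = k" using i by simp
    thus "\<exists>i<n. d i = k" using i by blast
  }
  {
    assume "\<exists>i<n. d i = k"
    then obtain i where i: "i < n" "d i = k" by blast
    define v where "v = col U i"
    have v: "v \<in> carrier_vec n" unfolding v_def carrier_vec_def using U by simp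
    have Utv: "transpose_mat U *\<^sub>v v = unit_vec n i"
    proof -
      have "transpose_mat U *\<^sub>v v = col (transpose_mat U * U) i"
        unfolding v_def by (rule col_mult2[symmetric, of _ n n], insert U i, auto)
      thus ?thesis unfolding UtU using i by simp
    qed
    have Uu: "U *\<^sub>v unit_vec n i = v"
    proof -
      have "U *\<^sub>v unit_vec n i = col (U * 1\<^sub>m n) i"
        by (subst col_mult2[of _ n n], insert U i, auto)
      thus ?thesis unfolding v_def using U by simp
    qed
    have du: "diagm n d *\<^sub>v unit_vec n i = k \<cdot>\<^sub>v unit_vec n i"
      unfolding diagm_mult_vec[OF unit_vec_carrier] using i by (intro eq_vecI, auto)
    have "A *\<^sub>v v = U *\<^sub>v (diagm n d *\<^sub>v (transpose_mat U *\<^sub>v v))"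
      unfolding A by (rule mv3[OF U diagm_carrier Ut v])
    also have "\<dots> = k \<cdot>\<^sub>v v" unfolding Utv du mult_mat_vec[OF U unit_vec_carrier] Uu ..
    finally have Av: "A *\<^sub>v v = k \<cdot>\<^sub>v v" .
    have "v \<bullet> v = 1"
    proof -
      have "v \<bullet> v = (transpose_mat U * U) $$ (i, i)" unfolding v_def using U i by simp
      thus ?thesis unfolding UtU using i by simp
    qed
    hence "v \<noteq> 0\<^sub>v n" by auto
    hence "eigenvector A v k" unfolding eigenvector_def using v Av Ac by auto
    thus "eigenvalue A k" unfolding eigenvalue_def by blast
  }
qed

lemma sym_facts:
  fixes A :: "real mat"
  assumes A: "A \<in> carrier_mat n n" and S: "transpose_mat A = A" and n: "n > 0"
  shows "finite {k. eigenvalue A k}" "{k. eigenvalue A k} \<noteq> {}"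
    "eigenvalue A (lam_min A)" "eigenvalue A (lam_max A)" "lam_min A \<le> lam_max A"
    "\<And>k. eigenvalue A k \<Longrightarrow> lam_min A \<le> k \<and> k \<le> lam_max A"
    "\<And>v. v \<in> carrier_vec n \<Longrightarrow> lam_min A * (v \<bullet> v) \<le> v \<bullet> (A *\<^sub>v v)"
    "\<And>v. v \<in> carrier_vec n \<Longrightarrow> v \<bullet> (A *\<^sub>v v) \<le> lam_max A * (v \<bullet> v)"
proof -
  obtain U d where U: "U \<in> carrier_mat n n" and UtU: "transpose_mat U * U = 1\<^sub>m n"
    and AU: "A = U * diagm n d * transpose_mat U" using spectral[OF A S] by blast
  have E: "{k. eigenvalue A k} = d ` {..<n}" using eig_UdU[OF U UtU AU] by auto
  show fin: "finite {k. eigenvalue A k}" unfolding E by simp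
  show ne: "{k. eigenvalue A k} \<noteq> {}" unfolding E using n by auto
  show "eigenvalue A (lam_min A)" unfolding lam_min_def using Min_in[OF fin ne] by simp
  show "eigenvalue A (lam_max A)" unfolding lam_max_def using Max_in[OF fin ne] by simp
  show "lam_min A \<le> lam_max A"
  proof -
    obtain x where x: "x \<in> {k. eigenvalue A k}" using ne by blast
    show ?thesis unfolding lam_min_def lam_max_def using Min_le[OF fin x] Max_ge[OF fin x] by linarith
  qed
  show "\<And>k. eigenvalue A k \<Longrightarrow> lam_min A \<le> k \<and> k \<le> lam_max A"
    unfolding lam_min_def lam_max_def using fin by auto
  have dmin: "lam_min A \<le> d i" and dmax: "d i \<le> lam_max A" if "i < n" for i
    unfolding lam_min_def lam_max_def E using that by auto
  fix v :: "real vec" assume v: "v \<in> carrier_vec n"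
  define w where "w = transpose_mat U *\<^sub>v v"
  have q: "v \<bullet> (A *\<^sub>v v) = (\<Sum>i<n. d i * (w $ i)\<^sup>2)" unfolding AU w_def by (rule quad_UdU[OF U v])
  have nn: "(\<Sum>i<n. (w $ i)\<^sup>2) = v \<bullet> v" unfolding w_def by (rule norm_Ut[OF U UtU v])
  have "lam_min A * (v \<bullet> v) = (\<Sum>i<n. lam_min A * (w $ i)\<^sup>2)" unfolding nn[symmetric] by (simp add: sum_distrib_left)
  also have "\<dots> \<le> (\<Sum>i<n. d i * (w $ i)\<^sup>2)" by (rule sum_mono, rule mult_right_mono, auto simp: dmin)
  finally show "lam_min A * (v \<bullet> v) \<le> v \<bullet> (A *\<^sub>v v)" unfolding q .
  have "(\<Sum>i<n. d i * (w $ i)\<^sup>2) \<le> (\<Sum>i<n. lam_max A * (w $ i)\<^sup>2)" by (rule sum_mono, rule mult_right_mono, auto simp: dmax)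
  also have "\<dots> = lam_max A * (v \<bullet> v)" unfolding nn[symmetric] by (simp add: sum_distrib_left)
  finally show "v \<bullet> (A *\<^sub>v v) \<le> lam_max A * (v \<bullet> v)" unfolding q .
qed

lemma diagm_mult: "diagm n e * diagm n f = diagm n (\<lambda>i. e i * f i)"
proof (rule eq_matI)
  fix i j assume "i < dim_row (diagm n (\<lambda>i. e i * f i))" "j < dim_col (diagm n (\<lambda>i. e i * f i))"
  hence ij: "i < n" "j < n" by (auto simp: diagm_def)
  have "(diagm n e * diagm n f) $$ (i, j) = (\<Sum>k\<in>{0..<n}. (if i = k then e i else 0) * (if k = j then f k else 0))"
    using ij by (simp add: diagm_def scalar_prod_def row_def col_def)
  also have "\<dots> = (\<Sum>k\<in>{0..<n}. if k = i then (if i = j then e i * f i else 0) else 0)"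
    by (rule sum.cong, auto)
  also have "\<dots> = (if i = j then e i * f i else 0)" using ij by simp
  finally show "(diagm n e * diagm n f) $$ (i, j) = diagm n (\<lambda>i. e i * f i) $$ (i, j)"
    using ij by (simp add: diagm_def)
qed (auto simp: diagm_def)

lemma UdU_mult:
  fixes U :: "real mat"
  assumes U: "U \<in> carrier_mat n n" and UtU: "transpose_mat U * U = 1\<^sub>m n"
  shows "(U * diagm n e * transpose_mat U) * (U * diagm n f * transpose_mat U) = U * diagm n (\<lambda>i. e i * f i) * transpose_mat U"
proof -
  have Ut: "transpose_mat U \<in> carrier_mat n n" using U by simp
  have Ec: "diagm n e \<in> carrier_mat n n" and Fc: "diagm n f \<in> carrier_mat n n" by (rule diagm_carrier)+
  have X1: "U * diagm n e \<in> carrier_mat n n" using U Ec by (rule mult_carrier_mat)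
  have UF: "U * diagm n f \<in> carrier_mat n n" using U Fc by (rule mult_carrier_mat)
  have Y: "U * diagm n f * transpose_mat U \<in> carrier_mat n n" by (rule UdU_carrier[OF U])
  have e1: "(U * diagm n e * transpose_mat U) * (U * diagm n f * transpose_mat U)
      = (U * diagm n e) * (transpose_mat U * (U * diagm n f * transpose_mat U))"
    by (rule assoc_mult_mat[OF X1 Ut Y])
  have e0: "transpose_mat U * (U * diagm n f) = diagm n f"
  proof -
    have "transpose_mat U * (U * diagm n f) = (transpose_mat U * U) * diagm n f"
      by (rule assoc_mult_mat[symmetric, OF Ut U Fc])
    thus ?thesis unfolding UtU using Fc by simp
  qed
  have e2: "transpose_mat U * (U * diagm n f * transpose_mat U) = diagm n f * transpose_mat U"
    by (simp only: assoc_mult_mat[symmetric, OF Ut UF Ut] e0)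
  have e3: "(U * diagm n e) * (diagm n f * transpose_mat U) = U * (diagm n e * diagm n f) * transpose_mat U"
    by (simp only: assoc_mult_mat[symmetric, OF X1 Fc Ut] assoc_mult_mat[OF U Ec Fc])
  show ?thesis by (simp only: e1 e2 e3 diagm_mult)
qed

lemma sym_entry:
  assumes "M \<in> carrier_mat n n" "transpose_mat M = M" "i < n" "j < n"
  shows "M $$ (j, i) = M $$ (i, j)"
proof -
  have "transpose_mat M $$ (i, j) = M $$ (j, i)" using assms(1,3,4) by simp
  thus ?thesis using assms(2) by simp
qed

lemma sym_UdU:
  fixes U :: "real mat"
  assumes U: "U \<in> carrier_mat n n"
  shows "transpose_mat (U * diagm n e * transpose_mat U) = U * diagm n e * transpose_mat U"
proof -
  have "transpose_mat (U * diagm n e * transpose_mat U) = transpose_mat (transpose_mat U) * transpose_mat (U * diagm n e)"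
    by (rule transpose_mult[of "U * diagm n e" n n "transpose_mat U" n], insert U diagm_carrier[of n e], auto)
  also have "transpose_mat (U * diagm n e) = diagm n e * transpose_mat U"
    by (subst transpose_mult[of U n n "diagm n e" n], insert U diagm_carrier[of n e], auto)
  also have "transpose_mat (transpose_mat U) * (diagm n e * transpose_mat U) = U * (diagm n e * transpose_mat U)"
    by simp
  also have "\<dots> = U * diagm n e * transpose_mat U"
    by (rule assoc_mult_mat[symmetric, OF U diagm_carrier], insert U, simp)
  finally show ?thesis .
qed

lemma pd_sym_eig_zero:
  fixes D :: "real mat"
  assumes D: "D \<in> carrier_mat n n" and S: "transpose_mat D = D"
    and z: "\<And>k. eigenvalue D k \<Longrightarrow> k = 0"
  shows "D = 0\<^sub>m n n"
proof -
  obtain U d where U: "U \<in> carrier_mat n n" and UtU: "transpose_mat U * U = 1\<^sub>m n"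
    and DU: "D = U * diagm n d * transpose_mat U" using spectral[OF D S] by blast
  have "d i = 0" if "i < n" for i using eig_UdU[OF U UtU DU, of "d i"] z that by blast
  hence "diagm n d = 0\<^sub>m n n" unfolding diagm_def by (intro eq_matI, auto)
  thus ?thesis unfolding DU using U by simp
qed

lemma inv_sqrt_unique:
  fixes H S T :: "real mat"
  assumes H: "H \<in> carrier_mat n n"
    and S: "pos_def_mat S n" "S * S * H = 1\<^sub>m n"
    and T: "pos_def_mat T n" "T * T * H = 1\<^sub>m n"
  shows "S = T"
proof -
  have Sc: "S \<in> carrier_mat n n" and SS: "transpose_mat S = S" and Sp: "\<And>v. v \<in> carrier_vec n \<Longrightarrow> v \<noteq> 0\<^sub>v n \<Longrightarrow> v \<bullet> (S *\<^sub>v v) > 0"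
    using S(1) unfolding pos_def_mat_def by auto
  have Tc: "T \<in> carrier_mat n n" and TS: "transpose_mat T = T" and Tp: "\<And>v. v \<in> carrier_vec n \<Longrightarrow> v \<noteq> 0\<^sub>v n \<Longrightarrow> v \<bullet> (T *\<^sub>v v) > 0"
    using T(1) unfolding pos_def_mat_def by auto
  have HTT: "H * (T * T) = 1\<^sub>m n"
    by (rule mat_mult_left_right_inverse[of "T * T" n H], insert Tc H T(2), auto)
  have SSTT: "S * S = T * T"
  proof -
    have "S * S = S * S * (H * (T * T))" unfolding HTT using Sc by simp
    also have "\<dots> = (S * S * H) * (T * T)"
      by (rule assoc_mult_mat[symmetric, of "S * S" n n H n "T * T" n], insert Sc Tc H, auto)
    finally show ?thesis unfolding S(2) using Tc by simp
  qed
  define D where "D = S - T"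
  have Dc: "D \<in> carrier_mat n n" unfolding D_def using Tc by (rule minus_carrier_mat)
  have DS: "transpose_mat D = D" unfolding D_def using Sc Tc
    by (intro eq_matI, auto simp: sym_entry[OF Sc SS] sym_entry[OF Tc TS])
  have "D = 0\<^sub>m n n"
  proof (rule pd_sym_eig_zero[OF Dc DS])
    fix \<mu> assume "eigenvalue D \<mu>"
    then obtain w where "eigenvector D w \<mu>" unfolding eigenvalue_def by blast
    hence w: "w \<in> carrier_vec n" "w \<noteq> 0\<^sub>v n" "D *\<^sub>v w = \<mu> \<cdot>\<^sub>v w"
      unfolding eigenvector_def using Dc by auto
    define a where "a = S *\<^sub>v w"
    define b where "b = T *\<^sub>v w"
    have a: "a \<in> carrier_vec n" and b: "b \<in> carrier_vec n" unfolding a_def b_def using w Sc Tc by auto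
    have ab: "a = b + \<mu> \<cdot>\<^sub>v w"
    proof -
      have "D *\<^sub>v w = a - b" unfolding D_def a_def b_def using Sc Tc w by (simp add: minus_mult_distrib_mat_vec)
      thus ?thesis using w a b by (intro eq_vecI, auto)
    qed
    have aa: "a \<bullet> a = w \<bullet> ((S * S) *\<^sub>v w)"
    proof -
      have "w \<bullet> ((S * S) *\<^sub>v w) = w \<bullet> (S *\<^sub>v a)" unfolding a_def using Sc w by simp
      also have "\<dots> = a \<bullet> (S *\<^sub>v w)" by (rule sym_swap[OF Sc SS w(1) a])
      finally show ?thesis unfolding a_def by simp
    qed
    have bb: "b \<bullet> b = w \<bullet> ((T * T) *\<^sub>v w)"
    proof -
      have "w \<bullet> ((T * T) *\<^sub>v w) = w \<bullet> (T *\<^sub>v b)" unfolding b_def using Tc w by simp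
      also have "\<dots> = b \<bullet> (T *\<^sub>v w)" by (rule sym_swap[OF Tc TS w(1) b])
      finally show ?thesis unfolding b_def by simp
    qed
    have eq: "a \<bullet> a = b \<bullet> b" unfolding aa bb SSTT ..
    have "a \<bullet> a = b \<bullet> b + 2 * \<mu> * (w \<bullet> b) + \<mu> * \<mu> * (w \<bullet> w)"
      unfolding ab using b w
      by (simp add: add_scalar_prod_distrib[of _ n] scalar_prod_add_distrib[of _ n] comm_scalar_prod[of b n w] algebra_simps)
    hence "\<mu> * (2 * (w \<bullet> b) + \<mu> * (w \<bullet> w)) = 0" using eq by (simp add: algebra_simps)
    moreover have "w \<bullet> a = w \<bullet> b + \<mu> * (w \<bullet> w)"
      unfolding ab using b w by (simp add: scalar_prod_add_distrib[of _ n])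
    ultimately have "\<mu> * ((w \<bullet> a) + (w \<bullet> b)) = 0" by (simp add: algebra_simps)
    moreover have "w \<bullet> a > 0" "w \<bullet> b > 0" unfolding a_def b_def using Sp Tp w by auto
    ultimately show "\<mu> = 0" by simp
  qed
  hence D0: "D = 0\<^sub>m n n" .
  show ?thesis
  proof (rule eq_matI)
    fix i j assume "i < dim_row T" "j < dim_col T"
    hence ij: "i < n" "j < n" using Tc by auto
    have "D $$ (i,j) = 0" using D0 ij by simp
    thus "S $$ (i,j) = T $$ (i,j)" unfolding D_def using ij Sc Tc by simp
  qed (use Sc Tc in auto)
qed

lemma inv_sqrt_exists:
  fixes H :: "real mat"
  assumes H: "H \<in> carrier_mat n n" and HS: "transpose_mat H = H"
    and Hp: "\<And>v. v \<in> carrier_vec n \<Longrightarrow> v \<noteq> 0\<^sub>v n \<Longrightarrow> v \<bullet> (H *\<^sub>v v) > 0"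
  shows "\<exists>S. pos_def_mat S n \<and> S * S * H = 1\<^sub>m n"
proof -
  obtain U d where U: "U \<in> carrier_mat n n" and UtU: "transpose_mat U * U = 1\<^sub>m n"
    and HU: "H = U * diagm n d * transpose_mat U" using spectral[OF H HS] by blast
  have Ut: "transpose_mat U \<in> carrier_mat n n" using U by simp
  have UUt: "U * transpose_mat U = 1\<^sub>m n" by (rule mat_mult_left_right_inverse[OF Ut U UtU])
  have dpos: "d i > 0" if i: "i < n" for i
  proof -
    have "eigenvalue H (d i)" using eig_UdU[OF U UtU HU] i by blast
    then obtain v where "eigenvector H v (d i)" unfolding eigenvalue_def by blast
    hence v: "v \<in> carrier_vec n" "v \<noteq> 0\<^sub>v n" "H *\<^sub>v v = d i \<cdot>\<^sub>v v"
      unfolding eigenvector_def using H by auto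
    have "v \<bullet> (H *\<^sub>v v) = d i * (v \<bullet> v)" unfolding v(3) using v by simp
    moreover have "v \<bullet> (H *\<^sub>v v) > 0" by (rule Hp[OF v(1,2)])
    moreover have "v \<bullet> v > 0" using scalar_self_pos v by simp
    ultimately show ?thesis by (simp add: zero_less_mult_iff)
  qed
  define e where "e = (\<lambda>i. 1 / sqrt (d i))"
  define S where "S = U * diagm n e * transpose_mat U"
  have Sc: "S \<in> carrier_mat n n" unfolding S_def by (rule UdU_carrier[OF U])
  have SS: "transpose_mat S = S" unfolding S_def by (rule sym_UdU[OF U])
  have Sp: "v \<bullet> (S *\<^sub>v v) > 0" if v: "v \<in> carrier_vec n" "v \<noteq> 0\<^sub>v n" for v
  proof -
    define w where "w = transpose_mat U *\<^sub>v v"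
    have q: "v \<bullet> (S *\<^sub>v v) = (\<Sum>i<n. e i * (w $ i)\<^sup>2)" unfolding S_def w_def by (rule quad_UdU[OF U v(1)])
    have nn: "(\<Sum>i<n. (w $ i)\<^sup>2) = v \<bullet> v" unfolding w_def by (rule norm_Ut[OF U UtU v(1)])
    have "v \<bullet> v > 0" using scalar_self_pos v by simp
    then obtain i where i: "i < n" "(w $ i)\<^sup>2 \<noteq> 0" unfolding nn[symmetric]
      by (metis (mono_tags, lifting) less_irrefl sum.neutral lessThan_iff)
    have epos: "e j > 0" if "j < n" for j unfolding e_def using dpos[OF that] by simp
    have "(\<Sum>i<n. e i * (w $ i)\<^sup>2) > 0"
    proof (rule sum_pos2[of _ i])
      show "0 < e i * (w $ i)\<^sup>2" using epos[OF i(1)] i(2) by simp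
      fix j assume "j \<in> {..<n}"
      hence "e j > 0" using epos by simp
      thus "0 \<le> e j * (w $ j)\<^sup>2" by simp
    qed (use i in auto)
    thus ?thesis unfolding q .
  qed
  have "S * S * H = 1\<^sub>m n"
  proof -
    have dne: "d i \<noteq> 0" if "i < n" for i using dpos[OF that] by simp
    have "S * S * H = U * diagm n (\<lambda>i. e i * e i * d i) * transpose_mat U"
      unfolding S_def HU UdU_mult[OF U UtU] ..
    also have "diagm n (\<lambda>i. e i * e i * d i) = 1\<^sub>m n" unfolding diagm_def e_def
      by (intro eq_matI, auto simp: dpos less_imp_le dne)
    also have "U * 1\<^sub>m n = U" using U by simp
    finally show ?thesis using UUt by simp
  qed
  thus ?thesis using Sc SS Sp unfolding pos_def_mat_def by blast
qed

lemma inv_sqrt_spec: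
  fixes H :: "real mat"
  assumes H: "H \<in> carrier_mat n n" and HS: "transpose_mat H = H"
    and Hp: "\<And>v. v \<in> carrier_vec n \<Longrightarrow> v \<noteq> 0\<^sub>v n \<Longrightarrow> v \<bullet> (H *\<^sub>v v) > 0"
  shows "pos_def_mat (inv_sqrt H) n \<and> inv_sqrt H * inv_sqrt H * H = 1\<^sub>m n"
proof -
  obtain S where S: "pos_def_mat S n" "S * S * H = 1\<^sub>m n" using inv_sqrt_exists[OF H HS Hp] by blast
  have dr: "dim_row H = n" using H by simp
  have "inv_sqrt H = S" unfolding inv_sqrt_def dr
    by (rule the_equality, insert S inv_sqrt_unique[OF H], blast+)
  thus ?thesis using S by simp
qed

lemma var_le:
  fixes a y :: "nat \<Rightarrow> real"
  assumes s: "(\<Sum>j<p. a j) = 1"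
  shows "(\<Sum>j<p. a j * (y j)\<^sup>2) - (\<Sum>j<p. a j * y j)\<^sup>2 \<le> (\<Sum>j<p. a j * (y j - c)\<^sup>2)"
proof -
  have "(\<Sum>j<p. a j * (y j - c)\<^sup>2) = (\<Sum>j<p. a j * (y j)\<^sup>2 - 2 * c * (a j * y j) + c\<^sup>2 * a j)"
    by (rule sum.cong, auto simp: power2_eq_square algebra_simps)
  also have "\<dots> = (\<Sum>j<p. a j * (y j)\<^sup>2) - 2 * c * (\<Sum>j<p. a j * y j) + c\<^sup>2"
    by (simp add: sum.distrib sum_subtractf sum_distrib_left[symmetric] s)
  finally have eq: "(\<Sum>j<p. a j * (y j - c)\<^sup>2) = (\<Sum>j<p. a j * (y j)\<^sup>2) - 2 * c * (\<Sum>j<p. a j * y j) + c\<^sup>2" .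
  have "0 \<le> ((\<Sum>j<p. a j * y j) - c)\<^sup>2" by simp
  thus ?thesis unfolding eq by (simp add: power2_eq_square algebra_simps)
qed

lemma var_eq:
  fixes a y :: "nat \<Rightarrow> real"
  assumes s: "(\<Sum>j<p. a j) = 1"
  shows "(\<Sum>j<p. a j * (y j - (\<Sum>j<p. a j * y j))\<^sup>2) = (\<Sum>j<p. a j * (y j)\<^sup>2) - (\<Sum>j<p. a j * y j)\<^sup>2"
proof -
  define c where "c = (\<Sum>j<p. a j * y j)"
  have "(\<Sum>j<p. a j * (y j - c)\<^sup>2) = (\<Sum>j<p. a j * (y j)\<^sup>2 - 2 * c * (a j * y j) + c\<^sup>2 * a j)"
    by (rule sum.cong, auto simp: power2_eq_square algebra_simps)
  also have "\<dots> = (\<Sum>j<p. a j * (y j)\<^sup>2) - 2 * c * (\<Sum>j<p. a j * y j) + c\<^sup>2"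
    by (simp add: sum.distrib sum_subtractf sum_distrib_left[symmetric] s)
  finally show ?thesis unfolding c_def[symmetric] by (simp add: c_def power2_eq_square)
qed

lemma var_cmp:
  fixes a b y :: "nat \<Rightarrow> real"
  assumes sa: "(\<Sum>j<p. a j) = 1" and sb: "(\<Sum>j<p. b j) = 1"
    and ab: "\<And>j. j < p \<Longrightarrow> a j \<le> E * b j"
  shows "(\<Sum>j<p. a j * (y j)\<^sup>2) - (\<Sum>j<p. a j * y j)\<^sup>2 \<le> E * ((\<Sum>j<p. b j * (y j)\<^sup>2) - (\<Sum>j<p. b j * y j)\<^sup>2)"
proof -
  define m where "m = (\<Sum>j<p. b j * y j)"
  have "(\<Sum>j<p. a j * (y j)\<^sup>2) - (\<Sum>j<p. a j * y j)\<^sup>2 \<le> (\<Sum>j<p. a j * (y j - m)\<^sup>2)"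
    by (rule var_le[OF sa])
  also have "\<dots> \<le> (\<Sum>j<p. E * b j * (y j - m)\<^sup>2)"
    by (rule sum_mono, rule mult_right_mono, auto simp: ab)
  also have "\<dots> = E * (\<Sum>j<p. b j * (y j - m)\<^sup>2)" by (simp add: sum_distrib_left mult.assoc)
  also have "(\<Sum>j<p. b j * (y j - m)\<^sup>2) = (\<Sum>j<p. b j * (y j)\<^sup>2) - (\<Sum>j<p. b j * y j)\<^sup>2"
    unfolding m_def by (rule var_eq[OF sb])
  finally show ?thesis .
qed

lemma softmax_pos:
  assumes "dim_row X > 0"
  shows "softmax X \<theta> j > 0"
proof -
  have "(\<Sum>l<dim_row X. exp (row X l \<bullet> \<theta>)) > 0"
    by (rule sum_pos, insert assms, auto)
  thus ?thesis unfolding softmax_def by simp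
qed

lemma softmax_sum:
  assumes "dim_row X > 0"
  shows "(\<Sum>j<dim_row X. softmax X \<theta> j) = 1"
proof -
  have "(\<Sum>l<dim_row X. exp (row X l \<bullet> \<theta>)) > 0"
    by (rule sum_pos, insert assms, auto)
  thus ?thesis unfolding softmax_def by (simp add: sum_divide_distrib[symmetric])
qed

lemma softmax_ratio:
  fixes X :: "real mat"
  assumes X: "X \<in> carrier_mat p L" and p: "p > 0"
    and th: "\<theta> \<in> carrier_vec L" and th': "\<theta>' \<in> carrier_vec L"
    and r: "\<And>j. j < p \<Longrightarrow> \<bar>row X j \<bullet> (\<theta> - \<theta>')\<bar> \<le> r"
    and j: "j < p"
  shows "softmax X \<theta> j \<le> exp (2 * r) * softmax X \<theta>' j"
proof -
  have split: "row X l \<bullet> \<theta> = row X l \<bullet> \<theta>' + row X l \<bullet> (\<theta> - \<theta>')" if "l < p" for l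
    using that X th th' by (simp add: scalar_prod_minus_distrib[of _ L])
  have up: "exp (row X l \<bullet> \<theta>) \<le> exp (row X l \<bullet> \<theta>') * exp r" if "l < p" for l
    using split[OF that] r[OF that] by (simp add: exp_add[symmetric])
  have lo: "exp (row X l \<bullet> \<theta>') * exp (- r) \<le> exp (row X l \<bullet> \<theta>)" if "l < p" for l
    using split[OF that] r[OF that] by (simp add: exp_add[symmetric])
  define Z where "Z = (\<Sum>l<p. exp (row X l \<bullet> \<theta>))"
  define Z' where "Z' = (\<Sum>l<p. exp (row X l \<bullet> \<theta>'))"
  have Z'pos: "Z' > 0" unfolding Z'_def by (rule sum_pos, insert p, auto)
  have Zlo: "Z' * exp (- r) \<le> Z" unfolding Z_def Z'_def sum_distrib_right
    by (rule sum_mono, rule lo, auto)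
  have dr: "dim_row X = p" using X by simp
  have "softmax X \<theta> j = exp (row X j \<bullet> \<theta>) / Z" unfolding softmax_def Z_def dr ..
  also have "\<dots> \<le> (exp (row X j \<bullet> \<theta>') * exp r) / (Z' * exp (- r))"
    by (rule frac_le, insert up[OF j] Zlo Z'pos, auto)
  also have "\<dots> = (exp r / exp (- r)) * (exp (row X j \<bullet> \<theta>') / Z')" by (simp add: ac_simps)
  also have "exp r / exp (- r) = exp (2 * r)" by (simp add: exp_minus exp_add[symmetric] field_simps mult_2)
  also have "exp (row X j \<bullet> \<theta>') / Z' = softmax X \<theta>' j" unfolding softmax_def Z'_def dr ..
  finally show ?thesis .
qed

lemma XBX_carrier:
  fixes X B :: "real mat"
  assumes X: "X \<in> carrier_mat p L" and B: "B \<in> carrier_mat p p"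
  shows "transpose_mat X * B * X \<in> carrier_mat L L"
  using X B by simp

lemma XBX_sym:
  fixes X B :: "real mat"
  assumes X: "X \<in> carrier_mat p L" and B: "B \<in> carrier_mat p p" and BS: "transpose_mat B = B"
  shows "transpose_mat (transpose_mat X * B * X) = transpose_mat X * B * X"
proof -
  have "transpose_mat (transpose_mat X * B * X) = transpose_mat X * transpose_mat (transpose_mat X * B)"
    by (rule transpose_mult[of _ L p], insert X B, auto)
  also have "transpose_mat (transpose_mat X * B) = transpose_mat B * X"
    by (subst transpose_mult[of _ L p], insert X B, auto)
  finally show ?thesis using X B BS by simp
qed

lemma XBX_quad:
  fixes X B :: "real mat"
  assumes X: "X \<in> carrier_mat p L" and B: "B \<in> carrier_mat p p" and v: "v \<in> carrier_vec L"
  shows "v \<bullet> ((transpose_mat X * B * X) *\<^sub>v v) = (X *\<^sub>v v) \<bullet> (B *\<^sub>v (X *\<^sub>v v))"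
proof -
  define z where "z = B *\<^sub>v (X *\<^sub>v v)"
  have z: "z \<in> carrier_vec p" unfolding z_def using B X v by simp
  have "(transpose_mat X * B * X) *\<^sub>v v = transpose_mat X *\<^sub>v z" unfolding z_def
    by (rule mv3[OF _ B X v], insert X, simp)
  moreover have "(transpose_mat X *\<^sub>v z) \<bullet> v = z \<bullet> (X *\<^sub>v v)" by (rule transpose_vec_mult_scalar[OF X v z])
  moreover have "(transpose_mat X *\<^sub>v z) \<bullet> v = v \<bullet> (transpose_mat X *\<^sub>v z)" by (rule comm_scalar_prod[of _ L], insert X z v, auto)
  moreover have "z \<bullet> (X *\<^sub>v v) = (X *\<^sub>v v) \<bullet> z" by (rule comm_scalar_prod[of _ p], insert X z v, auto)
  ultimately show ?thesis unfolding z_def by simp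
qed

definition Bmat :: "nat \<Rightarrow> (nat \<Rightarrow> real) \<Rightarrow> real mat" where
  "Bmat p a = diagm p a - mat p p (\<lambda>(i,j). a i * a j)"

lemma Bmat_carrier: "Bmat p a \<in> carrier_mat p p" unfolding Bmat_def by (rule minus_carrier_mat, simp)

lemma Bmat_sym: "transpose_mat (Bmat p a) = Bmat p a"
  unfolding Bmat_def diagm_def by (intro eq_matI, auto)

lemma Bmat_quad:
  assumes y: "y \<in> carrier_vec p"
  shows "y \<bullet> (Bmat p a *\<^sub>v y) = (\<Sum>j<p. a j * (y $ j)\<^sup>2) - (\<Sum>j<p. a j * y $ j)\<^sup>2"
proof -
  define S where "S = (\<Sum>j<p. a j * y $ j)"
  have mv: "mat p p (\<lambda>(i,j). a i * a j) *\<^sub>v y = vec p (\<lambda>i. a i * S)"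
  proof (rule eq_vecI)
    fix i assume "i < dim_vec (vec p (\<lambda>i. a i * S))"
    hence i: "i < p" by simp
    have "(mat p p (\<lambda>(i,j). a i * a j) *\<^sub>v y) $ i = (\<Sum>j\<in>{0..<p}. a i * a j * y $ j)"
      using i y by (simp add: scalar_prod_def row_def)
    also have "\<dots> = a i * S" unfolding S_def by (simp add: sum_distrib_left lessThan_atLeast0 mult.assoc)
    finally show "(mat p p (\<lambda>(i,j). a i * a j) *\<^sub>v y) $ i = vec p (\<lambda>i. a i * S) $ i" using i by simp
  qed simp
  have "Bmat p a *\<^sub>v y = diagm p a *\<^sub>v y - mat p p (\<lambda>(i,j). a i * a j) *\<^sub>v y"
    unfolding Bmat_def by (rule minus_mult_distrib_mat_vec[of _ p p], insert y diagm_carrier[of p a], auto)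
  also have "\<dots> = vec p (\<lambda>i. a i * y $ i - a i * S)" unfolding mv diagm_mult_vec[OF y]
    by (intro eq_vecI, auto)
  finally have By: "Bmat p a *\<^sub>v y = vec p (\<lambda>i. a i * y $ i - a i * S)" .
  have "y \<bullet> (Bmat p a *\<^sub>v y) = (\<Sum>i<p. y $ i * (a i * y $ i - a i * S))"
    unfolding By using y by (simp add: scalar_prod_def lessThan_atLeast0)
  also have "\<dots> = (\<Sum>i<p. a i * (y $ i)\<^sup>2) - S * S"
    by (simp add: sum_subtractf S_def sum_distrib_right power2_eq_square algebra_simps)
  finally show ?thesis unfolding S_def power2_eq_square .
qed

lemma Hmat_eq: "Hmat X \<theta> = transpose_mat X * Bmat (dim_row X) (softmax X \<theta>) * X"
  unfolding Hmat_def Bmat_def ..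

lemma diag_quad:
  assumes y: "y \<in> carrier_vec p"
  shows "y \<bullet> (diagm p a *\<^sub>v y) = (\<Sum>j<p. a j * (y $ j)\<^sup>2)"
  unfolding diagm_mult_vec[OF y] using y
  by (simp add: scalar_prod_def lessThan_atLeast0 power2_eq_square algebra_simps)

lemma Hmat_facts:
  fixes X :: "real mat"
  assumes X: "X \<in> carrier_mat p L"
  shows "Hmat X \<theta> \<in> carrier_mat L L" "transpose_mat (Hmat X \<theta>) = Hmat X \<theta>"
    "Mmat X \<theta> \<in> carrier_mat L L" "transpose_mat (Mmat X \<theta>) = Mmat X \<theta>"
    "\<And>v. v \<in> carrier_vec L \<Longrightarrow> v \<bullet> (Hmat X \<theta> *\<^sub>v v) =
       (\<Sum>j<p. softmax X \<theta> j * ((X *\<^sub>v v) $ j)\<^sup>2) - (\<Sum>j<p. softmax X \<theta> j * (X *\<^sub>v v) $ j)\<^sup>2"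
    "\<And>v. v \<in> carrier_vec L \<Longrightarrow> v \<bullet> (Mmat X \<theta> *\<^sub>v v) =
       (\<Sum>j<p. softmax X \<theta> j * ((X *\<^sub>v v) $ j)\<^sup>2)"
proof -
  have dr: "dim_row X = p" using X by simp
  have B: "Bmat p (softmax X \<theta>) \<in> carrier_mat p p" by (rule Bmat_carrier)
  have D: "diagm p (softmax X \<theta>) \<in> carrier_mat p p" by (rule diagm_carrier)
  show "Hmat X \<theta> \<in> carrier_mat L L" unfolding Hmat_eq dr
    by (rule mult_carrier_mat[OF mult_carrier_mat[OF _ B] X], insert X, simp)
  show "transpose_mat (Hmat X \<theta>) = Hmat X \<theta>" unfolding Hmat_eq dr by (rule XBX_sym[OF X B Bmat_sym])
  show "Mmat X \<theta> \<in> carrier_mat L L" unfolding Mmat_def dr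
    by (rule mult_carrier_mat[OF mult_carrier_mat[OF _ D] X], insert X, simp)
  show "transpose_mat (Mmat X \<theta>) = Mmat X \<theta>" unfolding Mmat_def dr by (rule XBX_sym[OF X D diagm_transpose])
  fix v :: "real vec" assume v: "v \<in> carrier_vec L"
  have y: "X *\<^sub>v v \<in> carrier_vec p" using X v by simp
  show "v \<bullet> (Hmat X \<theta> *\<^sub>v v) =
       (\<Sum>j<p. softmax X \<theta> j * ((X *\<^sub>v v) $ j)\<^sup>2) - (\<Sum>j<p. softmax X \<theta> j * (X *\<^sub>v v) $ j)\<^sup>2"
    unfolding Hmat_eq dr XBX_quad[OF X B v] by (rule Bmat_quad[OF y])
  show "v \<bullet> (Mmat X \<theta> *\<^sub>v v) = (\<Sum>j<p. softmax X \<theta> j * ((X *\<^sub>v v) $ j)\<^sup>2)"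
    unfolding Mmat_def dr XBX_quad[OF X D v] by (rule diag_quad[OF y])
qed

lemma exp_quarter: "exp (1/4 :: real) \<le> 3/2"
proof -
  have "norm (exp (1/4 :: real)) \<le> 1 + 2 * norm (1/4 :: real)"
    by (rule exp_bound_lemma, simp)
  thus ?thesis by simp
qed

lemma Xnorm_ge:
  assumes "j < dim_row X"
  shows "vnorm (row X j) \<le> Xnorm X"
  unfolding Xnorm_def using assms by (intro Max_ge, auto)

lemma Xnorm_nonneg:
  assumes "dim_row X > 0"
  shows "0 \<le> Xnorm X"
proof -
  have "0 \<le> vnorm (row X 0)" unfolding vnorm_def using scalar_self_nonneg[of "row X 0"] by simp
  thus ?thesis using Xnorm_ge[of 0 X] assms by simp
qed

theorem lemma8:
  shows "\<exists>C0::real. 0 < C0 \<and> C0 < 1/2 \<and>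
    (\<forall>c0::real. 0 \<le> c0 \<and> c0 \<le> C0 \<longrightarrow>
      (\<exists>c::real. 0 < c \<and> c < 1 \<and>
        (\<forall>(X::real mat) p L K (\<alpha>s::nat \<Rightarrow> real) (\<Theta>s::nat \<Rightarrow> real vec)
            (sl::real) (su::real) (vs::real) (\<delta>0::real).
           X \<in> carrier_mat p L \<longrightarrow> 0 < p \<longrightarrow> 0 < L \<longrightarrow>
           (\<forall>k<K. 0 < \<alpha>s k) \<longrightarrow>
           in_Omega_star X K \<alpha>s \<Theta>s \<alpha>s \<Theta>s \<longrightarrow>
           0 < sl \<longrightarrow> 0 < su \<longrightarrow>
           assumption_A X K \<alpha>s \<Theta>s (sl\<^sup>2) (su\<^sup>2) (vs\<^sup>2) \<longrightarrow>
           \<delta>0 \<le> c0 / vs\<^sup>2 * (su / Xnorm X) \<longrightarrow>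
           (\<forall>k<K. \<forall>\<theta> \<in> carrier_vec L. vnorm (\<theta> - \<Theta>s k) \<le> \<delta>0 / su \<longrightarrow>
              (1 - c) * sl\<^sup>2 \<le> lam_min (Hmat X \<theta>) \<and>
              lam_min (Hmat X \<theta>) \<le> lam_max (Hmat X \<theta>) \<and>
              lam_max (Hmat X \<theta>) \<le> (1 + c) * su\<^sup>2))))"
proof -
  have main: "\<forall>c0::real. 0 \<le> c0 \<and> c0 \<le> 1/8 \<longrightarrow>
      (\<exists>c::real. 0 < c \<and> c < 1 \<and>
        (\<forall>(X::real mat) p L K (\<alpha>s::nat \<Rightarrow> real) (\<Theta>s::nat \<Rightarrow> real vec)
            (sl::real) (su::real) (vs::real) (\<delta>0::real).
           X \<in> carrier_mat p L \<longrightarrow> 0 < p \<longrightarrow> 0 < L \<longrightarrow>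
           (\<forall>k<K. 0 < \<alpha>s k) \<longrightarrow>
           in_Omega_star X K \<alpha>s \<Theta>s \<alpha>s \<Theta>s \<longrightarrow>
           0 < sl \<longrightarrow> 0 < su \<longrightarrow>
           assumption_A X K \<alpha>s \<Theta>s (sl\<^sup>2) (su\<^sup>2) (vs\<^sup>2) \<longrightarrow>
           \<delta>0 \<le> c0 / vs\<^sup>2 * (su / Xnorm X) \<longrightarrow>
           (\<forall>k<K. \<forall>\<theta> \<in> carrier_vec L. vnorm (\<theta> - \<Theta>s k) \<le> \<delta>0 / su \<longrightarrow>
              (1 - c) * sl\<^sup>2 \<le> lam_min (Hmat X \<theta>) \<and>
              lam_min (Hmat X \<theta>) \<le> lam_max (Hmat X \<theta>) \<and>
              lam_max (Hmat X \<theta>) \<le> (1 + c) * su\<^sup>2)))"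
  proof (intro allI impI, rule exI[of _ "1/2"], rule conjI, simp, rule conjI, simp, intro allI impI ballI)
    fix c0 :: real
    fix X :: "real mat" and p L K and \<alpha>s :: "nat \<Rightarrow> real" and \<Theta>s :: "nat \<Rightarrow> real vec"
      and sl su vs \<delta>0 :: real and k and \<theta> :: "real vec"
    assume c0: "0 \<le> c0 \<and> c0 \<le> 1/8" and X: "X \<in> carrier_mat p L" and p: "0 < p" and L: "0 < L"
      and "\<forall>k<K. 0 < \<alpha>s k" and Om: "in_Omega_star X K \<alpha>s \<Theta>s \<alpha>s \<Theta>s"
      and sl: "0 < sl" and su: "0 < su" and AA: "assumption_A X K \<alpha>s \<Theta>s (sl\<^sup>2) (su\<^sup>2) (vs\<^sup>2)"
      and d0: "\<delta>0 \<le> c0 / vs\<^sup>2 * (su / Xnorm X)" and k: "k < K" and th: "\<theta> \<in> carrier_vec L"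
      and dist: "vnorm (\<theta> - \<Theta>s k) \<le> \<delta>0 / su"
    have dr: "dim_row X = p" and dc: "dim_col X = L" using X by auto
    have ths: "\<Theta>s k \<in> carrier_vec L" using Om k unfolding in_Omega_star_def in_param_def dc by auto
    define ts where "ts = \<Theta>s k"
    have ts: "ts \<in> carrier_vec L" unfolding ts_def by (rule ths)
    have comb: "1 \<cdot>\<^sub>v \<Theta>s k + (1 - 1) \<cdot>\<^sub>v \<Theta>s k = ts" unfolding ts_def using ths by (intro eq_vecI, auto)
    have AAk: "\<forall>a<K. \<forall>b<K. \<forall>u::real. 0 \<le> u \<and> u \<le> 1 \<longrightarrow>
           (let \<theta> = u \<cdot>\<^sub>v \<Theta>s a + (1 - u) \<cdot>\<^sub>v \<Theta>s b in
              sl\<^sup>2 \<le> lam_min (Hmat X \<theta>) \<and> lam_min (Hmat X \<theta>) \<le> lam_max (Hmat X \<theta>) \<and>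
              lam_max (Hmat X \<theta>) \<le> su\<^sup>2 \<and>
              lam_max (inv_sqrt (Hmat X \<theta>) * Mmat X \<theta> * inv_sqrt (Hmat X \<theta>)) \<le> vs\<^sup>2)"
      using AA Om unfolding assumption_A_def by blast
    have "let \<theta> = 1 \<cdot>\<^sub>v \<Theta>s k + (1 - 1) \<cdot>\<^sub>v \<Theta>s k in
              sl\<^sup>2 \<le> lam_min (Hmat X \<theta>) \<and> lam_min (Hmat X \<theta>) \<le> lam_max (Hmat X \<theta>) \<and>
              lam_max (Hmat X \<theta>) \<le> su\<^sup>2 \<and>
              lam_max (inv_sqrt (Hmat X \<theta>) * Mmat X \<theta> * inv_sqrt (Hmat X \<theta>)) \<le> vs\<^sup>2"
      using AAk k zero_le_one order_refl[of "1::real"] by blast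
    hence "sl\<^sup>2 \<le> lam_min (Hmat X ts) \<and> lam_min (Hmat X ts) \<le> lam_max (Hmat X ts) \<and>
              lam_max (Hmat X ts) \<le> su\<^sup>2 \<and>
              lam_max (inv_sqrt (Hmat X ts) * Mmat X ts * inv_sqrt (Hmat X ts)) \<le> vs\<^sup>2"
      unfolding Let_def comb .
    hence A1: "sl\<^sup>2 \<le> lam_min (Hmat X ts)" and A2: "lam_max (Hmat X ts) \<le> su\<^sup>2"
      and A3: "lam_max (inv_sqrt (Hmat X ts) * Mmat X ts * inv_sqrt (Hmat X ts)) \<le> vs\<^sup>2" by auto
    define Hs where "Hs = Hmat X ts"
    define Ms where "Ms = Mmat X ts"
    note HF = Hmat_facts[OF X, of ts]
    have Hs: "Hs \<in> carrier_mat L L" "transpose_mat Hs = Hs" unfolding Hs_def using HF by auto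
    have Ms: "Ms \<in> carrier_mat L L" "transpose_mat Ms = Ms" unfolding Ms_def using HF by auto
    note SHs = sym_facts[OF Hs L]
    have Hs_lo: "sl\<^sup>2 * (v \<bullet> v) \<le> v \<bullet> (Hs *\<^sub>v v)" if v: "v \<in> carrier_vec L" for v
    proof -
      have "sl\<^sup>2 * (v \<bullet> v) \<le> lam_min Hs * (v \<bullet> v)"
        using A1 scalar_self_nonneg[of v] unfolding Hs_def by (intro mult_right_mono, auto)
      also have "\<dots> \<le> v \<bullet> (Hs *\<^sub>v v)" by (rule SHs(7)[OF v])
      finally show ?thesis .
    qed
    have Hs_hi: "v \<bullet> (Hs *\<^sub>v v) \<le> su\<^sup>2 * (v \<bullet> v)" if v: "v \<in> carrier_vec L" for v
    proof -
      have "v \<bullet> (Hs *\<^sub>v v) \<le> lam_max Hs * (v \<bullet> v)" by (rule SHs(8)[OF v])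
      also have "\<dots> \<le> su\<^sup>2 * (v \<bullet> v)"
        using A2 scalar_self_nonneg[of v] unfolding Hs_def by (intro mult_right_mono, auto)
      finally show ?thesis .
    qed
    have Hs_pd: "v \<bullet> (Hs *\<^sub>v v) > 0" if "v \<in> carrier_vec L" "v \<noteq> 0\<^sub>v L" for v
    proof -
      have "0 < sl\<^sup>2 * (v \<bullet> v)" using sl scalar_self_pos[OF that] by simp
      thus ?thesis using Hs_lo[OF that(1)] by simp
    qed
    define S where "S = inv_sqrt Hs"
    have Sspec: "pos_def_mat S L \<and> S * S * Hs = 1\<^sub>m L" unfolding S_def by (rule inv_sqrt_spec[OF Hs Hs_pd])
    have Sc: "S \<in> carrier_mat L L" and SS: "transpose_mat S = S" and SSH: "S * S * Hs = 1\<^sub>m L"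
      using Sspec unfolding pos_def_mat_def by auto
    have SHS: "S * Hs * S = 1\<^sub>m L"
    proof -
      have "S * (S * Hs) = 1\<^sub>m L" using SSH Sc Hs by simp
      hence "(S * Hs) * S = 1\<^sub>m L" by (intro mat_mult_left_right_inverse[of S L], insert Sc Hs, auto)
      thus ?thesis .
    qed
    define N where "N = S * Ms * S"
    have Nc: "N \<in> carrier_mat L L" unfolding N_def using Sc Ms by simp
    have NS: "transpose_mat N = N"
    proof -
      have "transpose_mat N = transpose_mat S * transpose_mat (S * Ms)"
        unfolding N_def by (rule transpose_mult[of _ L L], insert Sc Ms, auto)
      also have "transpose_mat (S * Ms) = transpose_mat Ms * transpose_mat S"
        by (rule transpose_mult[of _ L L], insert Sc Ms, auto)
      finally show ?thesis unfolding N_def using SS Ms Sc by simp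
    qed
    have vs1: "1 \<le> vs\<^sup>2"
    proof -
      define u :: "real vec" where "u = unit_vec L 0"
      have u: "u \<in> carrier_vec L" unfolding u_def by simp
      have uu: "u \<bullet> u = 1" unfolding u_def using L by simp
      define z where "z = S *\<^sub>v u"
      have z: "z \<in> carrier_vec L" unfolding z_def using Sc u by simp
      have "u \<bullet> (N *\<^sub>v u) = u \<bullet> (S *\<^sub>v (Ms *\<^sub>v z))" unfolding N_def z_def mv3[OF Sc Ms(1) Sc u] ..
      also have "\<dots> = (Ms *\<^sub>v z) \<bullet> (S *\<^sub>v u)" by (rule sym_swap[OF Sc SS u], insert Ms z, auto)
      also have "\<dots> = z \<bullet> (Ms *\<^sub>v z)" unfolding z_def[symmetric] by (rule comm_scalar_prod[of _ L], insert Ms z, auto)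
      finally have uN: "u \<bullet> (N *\<^sub>v u) = z \<bullet> (Ms *\<^sub>v z)" .
      have "u \<bullet> ((S * Hs * S) *\<^sub>v u) = u \<bullet> (S *\<^sub>v (Hs *\<^sub>v z))" unfolding z_def mv3[OF Sc Hs(1) Sc u] ..
      also have "\<dots> = (Hs *\<^sub>v z) \<bullet> (S *\<^sub>v u)" by (rule sym_swap[OF Sc SS u], insert Hs z, auto)
      also have "\<dots> = z \<bullet> (Hs *\<^sub>v z)" unfolding z_def[symmetric] by (rule comm_scalar_prod[of _ L], insert Hs z, auto)
      finally have "z \<bullet> (Hs *\<^sub>v z) = 1" unfolding SHS using uu u by simp
      moreover have "z \<bullet> (Hs *\<^sub>v z) \<le> z \<bullet> (Ms *\<^sub>v z)"
        unfolding Hs_def Ms_def Hmat_facts(5)[OF X z, of ts] Hmat_facts(6)[OF X z, of ts] by simp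
      ultimately have "1 \<le> u \<bullet> (N *\<^sub>v u)" using uN by simp
      also have "\<dots> \<le> lam_max N * (u \<bullet> u)" by (rule sym_facts(8)[OF Nc NS L u])
      also have "\<dots> \<le> vs\<^sup>2" using A3 uu unfolding N_def S_def Hs_def Ms_def by simp
      finally show ?thesis .
    qed
    define r where "r = Xnorm X * vnorm (\<theta> - ts)"
    have dv: "\<theta> - ts \<in> carrier_vec L" using th ts by simp
    have vn0: "0 \<le> vnorm (\<theta> - ts)" unfolding vnorm_def using scalar_self_nonneg[of "\<theta> - ts"] by simp
    have Xn0: "0 \<le> Xnorm X" using Xnorm_nonneg[of X] p dr by simp
    have rb: "\<bar>row X j \<bullet> (\<theta> - ts)\<bar> \<le> r" if j: "j < p" for j
    proof -
      have rj: "row X j \<in> carrier_vec L" using X j by simp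
      have "\<bar>row X j \<bullet> (\<theta> - ts)\<bar> \<le> vnorm (row X j) * vnorm (\<theta> - ts)" by (rule vnorm_CS[OF rj dv])
      also have "\<dots> \<le> Xnorm X * vnorm (\<theta> - ts)"
        by (rule mult_right_mono[OF Xnorm_ge vn0], insert j dr, auto)
      finally show ?thesis unfolding r_def .
    qed
    have rb': "\<bar>row X j \<bullet> (ts - \<theta>)\<bar> \<le> r" if j: "j < p" for j
    proof -
      have rj: "row X j \<in> carrier_vec L" using X j by simp
      have "row X j \<bullet> (ts - \<theta>) = - (row X j \<bullet> (\<theta> - ts))"
        using rj th ts by (simp add: scalar_prod_minus_distrib[of _ L])
      thus ?thesis using rb[OF j] by simp
    qed
    have rc0: "r \<le> c0"
    proof (cases "Xnorm X = 0")
      case True thus ?thesis unfolding r_def using c0 by simp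
    next
      case False
      hence Xp: "Xnorm X > 0" using Xn0 by simp
      have "r \<le> Xnorm X * (\<delta>0 / su)" unfolding r_def using dist Xp by (intro mult_left_mono, auto simp: ts_def)
      also have "\<dots> \<le> Xnorm X * ((c0 / vs\<^sup>2 * (su / Xnorm X)) / su)"
        using d0 Xp su by (intro mult_left_mono divide_right_mono, auto)
      also have "\<dots> = c0 / vs\<^sup>2" using Xp su by (simp add: field_simps)
      also have "\<dots> \<le> c0 / 1" using vs1 c0 by (intro divide_left_mono, auto)
      also have "\<dots> = c0" by simp
      finally show ?thesis .
    qed
    define E where "E = exp (2 * r)"
    have E: "E \<le> 3/2" "E > 0"
    proof -
      have "E \<le> exp (1/4)" unfolding E_def using rc0 c0 by simp
      thus "E \<le> 3/2" using exp_quarter by simp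
      show "E > 0" unfolding E_def by simp
    qed
    define a where "a = softmax X \<theta>"
    define b where "b = softmax X ts"
    have sa: "(\<Sum>j<p. a j) = 1" unfolding a_def using softmax_sum[of X \<theta>] p dr by simp
    have sb: "(\<Sum>j<p. b j) = 1" unfolding b_def using softmax_sum[of X ts] p dr by simp
    have ab: "a j \<le> E * b j" if "j < p" for j
      unfolding a_def b_def E_def by (rule softmax_ratio[OF X p th ts rb that])
    have ba: "b j \<le> E * a j" if "j < p" for j
      unfolding a_def b_def E_def by (rule softmax_ratio[OF X p ts th rb' that])
    define H where "H = Hmat X \<theta>"
    have Hc: "H \<in> carrier_mat L L" "transpose_mat H = H" unfolding H_def using Hmat_facts[OF X] by auto
    note SH = sym_facts[OF Hc L]
    have eig: "(1/2) * sl\<^sup>2 \<le> k' \<and> k' \<le> (3/2) * su\<^sup>2" if ev: "eigenvalue H k'" for k'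
    proof -
      obtain v where "eigenvector H v k'" using ev unfolding eigenvalue_def by blast
      hence v: "v \<in> carrier_vec L" "v \<noteq> 0\<^sub>v L" "H *\<^sub>v v = k' \<cdot>\<^sub>v v"
        unfolding eigenvector_def using Hc by auto
      have vv: "v \<bullet> v > 0" by (rule scalar_self_pos[OF v(1,2)])
      define y where "y = (\<lambda>j. (X *\<^sub>v v) $ j)"
      define Va where "Va = (\<Sum>j<p. a j * (y j)\<^sup>2) - (\<Sum>j<p. a j * y j)\<^sup>2"
      define Vb where "Vb = (\<Sum>j<p. b j * (y j)\<^sup>2) - (\<Sum>j<p. b j * y j)\<^sup>2"
      have qa: "v \<bullet> (H *\<^sub>v v) = Va" unfolding H_def Va_def a_def y_def by (rule Hmat_facts(5)[OF X v(1)])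
      have qb: "v \<bullet> (Hs *\<^sub>v v) = Vb" unfolding Hs_def Vb_def b_def y_def by (rule Hmat_facts(5)[OF X v(1)])
      have kv: "k' * (v \<bullet> v) = Va" unfolding qa[symmetric] v(3) using v by simp
      have "Va \<le> E * Vb" unfolding Va_def Vb_def by (rule var_cmp[OF sa sb ab])
      also have "\<dots> \<le> E * (su\<^sup>2 * (v \<bullet> v))" using Hs_hi[OF v(1)] E unfolding qb by simp
      also have "\<dots> \<le> (3/2) * (su\<^sup>2 * (v \<bullet> v))" by (rule mult_right_mono[OF E(1)], insert vv, simp)
      finally have up: "k' * (v \<bullet> v) \<le> ((3/2) * su\<^sup>2) * (v \<bullet> v)" unfolding kv by simp
      have Vb_lo: "sl\<^sup>2 * (v \<bullet> v) \<le> Vb" using Hs_lo[OF v(1)] unfolding qb .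
      have VbE: "Vb \<le> E * Va" unfolding Va_def Vb_def by (rule var_cmp[OF sb sa ba])
      have "0 \<le> sl\<^sup>2 * (v \<bullet> v)" using vv by simp
      hence "0 \<le> E * Va" using Vb_lo VbE by linarith
      hence Va0: "0 \<le> Va" using E(2) by (simp add: zero_le_mult_iff)
      have EV: "E * Va \<le> (3/2) * Va" by (rule mult_right_mono[OF E(1) Va0])
      have "(3/2) * Va = ((3/2) * k') * (v \<bullet> v)" using kv by (simp add: algebra_simps)
      hence "sl\<^sup>2 * (v \<bullet> v) \<le> ((3/2) * k') * (v \<bullet> v)" using Vb_lo VbE EV by linarith
      hence lo: "sl\<^sup>2 \<le> (3/2) * k'" using vv by (simp add: mult_le_cancel_right)
      from up vv have "k' \<le> (3/2) * su\<^sup>2" by (simp add: mult_le_cancel_right)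
      moreover have "0 \<le> sl\<^sup>2" by simp
      ultimately show ?thesis using lo by linarith
    qed
    have "(1/2) * sl\<^sup>2 \<le> lam_min H" using eig[OF SH(3)] by simp
    moreover have "lam_max H \<le> (3/2) * su\<^sup>2" using eig[OF SH(4)] by simp
    ultimately show "(1 - 1/2) * sl\<^sup>2 \<le> lam_min (Hmat X \<theta>) \<and>
              lam_min (Hmat X \<theta>) \<le> lam_max (Hmat X \<theta>) \<and>
              lam_max (Hmat X \<theta>) \<le> (1 + 1/2) * su\<^sup>2"
      using SH(5) unfolding H_def by simp
  qed
  thus ?thesis by (intro exI[of _ "1/8"]) auto
qed

end
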